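(* Let $p$ be a prime and let $s(n)_{n\ge0}$ be a sequence of $p$-adic integers satisfying $s(n+\ell)+a_{\ell-1}s(n+\ell-1)+\cdots+a_0s(n)=0$ for all $n\ge0$ with $a_i\in\mathbb{Z}_p$. Let $g(x)=x^\ell+a_{\ell-1}x^{\ell-1}+\cdots+a_0$, let $K$ be a splitting field of $g$ over $\mathbb{Q}_p$ of degree $d$ and ramification index $e$, let $f=d/e$, and write $s(n)=\sum_\beta c_\beta(n)\beta^n$ for all $n\ge0$, where $\beta$ ranges over the distinct roots of $g$ in $K$ and $c_\beta(x)\in K[x]$. Let $a,b\in\mathbb Z$ with $a\ge1$. Then the limit $\lim_{n\to\infty}s(ap^{fn}+b)$ exists in $\mathbb{Z}_p$ and $$\lim_{n\to\infty}s(ap^{fn}+b)=\sum_{|\beta|_p=1}c_\beta(b)\,\omega(\beta)^a\beta^b.$$ In particular, this limit is algebraic over $\mathbb{Q}_p$.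
   Context: $|\cdot|_p$ on $K$ is the unique extension of the $p$-adic absolute value; the valuation has image $\frac1e\mathbb Z$ and a uniformizer $\pi$ has $|\pi|_p=p^{-1/e}$. The residue field of $\mathcal O_K=\{x:|x|_p\le1\}$ has $p^f$ elements and $\mathcal O_K$ contains the $(p^f-1)$-st roots of unity, which lie in distinct residue classes modulo $\pi$. For $x\in\mathcal O_K$ with $x\not\equiv0\pmod\pi$, $\omega(x)$ is the unique $(p^f-1)$-st root of unity congruent to $x$ modulo $\pi$. *)

theory Defs
  imports "HOL-Computational_Algebra.Computational_Algebra"
begin

definition abs_converges :: "('k \<Rightarrow> real) \<Rightarrow> (nat \<Rightarrow> 'k::ab_group_add) \<Rightarrow> 'k \<Rightarrow> bool" where
  "abs_converges absv X L \<longleftrightarrow> (\<forall>\<epsilon>>0. \<exists>N. \<forall>n\<ge>N. absv (X n - L) < \<epsilon>)"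

definition padic_absv :: "nat \<Rightarrow> ('k::field_char_0 \<Rightarrow> real) \<Rightarrow> bool" where
  "padic_absv p absv \<longleftrightarrow>
     (\<forall>x. absv x \<ge> 0) \<and> (\<forall>x. absv x = 0 \<longleftrightarrow> x = 0) \<and>
     (\<forall>x y. absv (x * y) = absv x * absv y) \<and>
     (\<forall>x y. absv (x + y) \<le> max (absv x) (absv y)) \<and>
     absv (of_nat p) = 1 / real p \<and>
     (\<forall>q::nat. prime q \<longrightarrow> q \<noteq> p \<longrightarrow> absv (of_nat q) = 1) \<and>
     (\<forall>X::nat \<Rightarrow> 'k. (\<forall>\<epsilon>>0. \<exists>N. \<forall>m\<ge>N. \<forall>n\<ge>N. absv (X m - X n) < \<epsilon>)
          \<longrightarrow> (\<exists>L. abs_converges absv X L))"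

text \<open>Q_p inside K: limits of sequences of rationals.\<close>
definition Qp_in :: "('k::field_char_0 \<Rightarrow> real) \<Rightarrow> 'k set" where
  "Qp_in absv = {x. \<exists>r::nat \<Rightarrow> rat. abs_converges absv (\<lambda>n. of_rat (r n)) x}"

definition Zp_in :: "('k::field_char_0 \<Rightarrow> real) \<Rightarrow> 'k set" where
  "Zp_in absv = {x \<in> Qp_in absv. absv x \<le> 1}"

definition field_generated_by :: "'k::field set \<Rightarrow> 'k set \<Rightarrow> bool" where
  "field_generated_by F S \<longleftrightarrow>
     (\<forall>T. F \<subseteq> T \<longrightarrow> S \<subseteq> T \<longrightarrow>
        (\<forall>x\<in>T. \<forall>y\<in>T. x + y \<in> T \<and> x * y \<in> T \<and> - x \<in> T \<and> inverse x \<in> T)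
        \<longrightarrow> T = UNIV)"

definition ext_degree :: "'k::field set \<Rightarrow> nat \<Rightarrow> bool" where
  "ext_degree F d \<longleftrightarrow> (\<exists>bs::'k list. length bs = d \<and>
     (\<forall>c. (\<forall>i<d. c i \<in> F) \<longrightarrow> (\<Sum>i<d. c i * bs ! i) = 0 \<longrightarrow> (\<forall>i<d. c i = 0)) \<and>
     (\<forall>x. \<exists>c. (\<forall>i<d. c i \<in> F) \<and> x = (\<Sum>i<d. c i * bs ! i)))"

text \<open>Teichmueller-type map: the unique (q-1)-st root of unity congruent to x
  modulo the maximal ideal (for a unit x, with q = p^f).\<close>
definition omega :: "('k::field \<Rightarrow> real) \<Rightarrow> nat \<Rightarrow> 'k \<Rightarrow> 'k" where
  "omega absv q x = (THE z. z ^ (q - 1) = 1 \<and> absv (x - z) < 1)"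

end

theory Submission
  imports Defs
begin


locale padic =
  fixes p :: nat and absv :: "'k::field_char_0 \<Rightarrow> real"
  assumes prime_p: "prime p" and pa: "padic_absv p absv"
begin

lemma av_nonneg[simp]: "absv x \<ge> 0" using pa unfolding padic_absv_def by blast
lemma av_zero_iff[simp]: "absv x = 0 \<longleftrightarrow> x = 0" using pa unfolding padic_absv_def by blast
lemma av_mult[simp]: "absv (x * y) = absv x * absv y" using pa unfolding padic_absv_def by blast
lemma av_ultra: "absv (x + y) \<le> max (absv x) (absv y)" using pa unfolding padic_absv_def by blast
lemma av_p: "absv (of_nat p :: 'k) = 1 / real p" using pa unfolding padic_absv_def by blast
lemma av_q: "prime q \<Longrightarrow> q \<noteq> p \<Longrightarrow> absv (of_nat q :: 'k) = 1" using pa unfolding padic_absv_def by blast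
lemma av_complete: "(\<forall>\<epsilon>>0. \<exists>N. \<forall>m\<ge>N. \<forall>n\<ge>N. absv (X m - X n) < \<epsilon>) \<Longrightarrow> \<exists>L. abs_converges absv X L"
  using pa unfolding padic_absv_def by blast

lemma p_gt1: "p > 1" using prime_p prime_gt_1_nat by blast

lemma av_0[simp]: "absv 0 = 0" by simp
lemma av_1[simp]: "absv 1 = 1"
proof -
  have "absv (1::'k) = absv 1 * absv 1" using av_mult[of 1 1] by simp
  moreover have "absv (1::'k) \<noteq> 0" by simp
  ultimately show ?thesis by (metis mult_cancel_left1)
qed
lemma av_pos[simp]: "absv x > 0 \<longleftrightarrow> x \<noteq> 0"
  using av_nonneg[of x] av_zero_iff[of x] by linarith

lemma av_power: "absv (x ^ n) = absv x ^ n" by (induction n) auto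

lemma av_minus1: "absv (-1 :: 'k) = 1"
proof -
  have "absv (-1::'k) * absv (-1) = 1" using av_mult[of "-1" "-1"] by simp
  thus ?thesis using av_nonneg[of "-1"] by (metis abs_of_nonneg abs_square_eq_1 nonzero_mult_div_cancel_right one_neq_zero power2_eq_square zero_less_one_class.zero_le_one av_1 mult_cancel_right2 mult_1)
qed

lemma av_uminus[simp]: "absv (- x) = absv x"
  using av_mult[of "-1" x] av_minus1 by simp

lemma av_diff_comm: "absv (x - y) = absv (y - x)"
  by (metis av_uminus minus_diff_eq)

lemma av_inverse: "absv (inverse x) = inverse (absv x)"
proof (cases "x = 0")
  case False
  then have "absv (inverse x) * absv x = 1" using av_mult[of "inverse x" x] by simp
  thus ?thesis using False by (metis av_zero_iff inverse_unique mult.commute)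
qed simp

lemma av_divide: "absv (x / y) = absv x / absv y"
  by (simp add: divide_inverse av_inverse)

lemma av_diff: "absv (x - y) \<le> max (absv x) (absv y)"
  using av_ultra[of x "-y"] by simp

lemma av_trans: "absv (x - z) \<le> max (absv (x - y)) (absv (y - z))"
  using av_ultra[of "x - y" "y - z"] by simp

lemma av_add_strict: "absv y < absv x \<Longrightarrow> absv (x + y) = absv x"
proof -
  assume a: "absv y < absv x"
  have "absv (x + y) \<le> absv x" using av_ultra[of x y] a by simp
  moreover have "absv x \<le> max (absv (x + y)) (absv y)" using av_ultra[of "x+y" "-y"] by simp
  ultimately show ?thesis using a by linarith
qed

lemma av_sum_le: "finite S \<Longrightarrow> (\<And>i. i \<in> S \<Longrightarrow> absv (f i) \<le> b) \<Longrightarrow> b \<ge> 0 \<Longrightarrow> absv (sum f S) \<le> b"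
proof (induction S rule: finite_induct)
  case (insert x F)
  have "absv (f x) \<le> b" "absv (sum f F) \<le> b" using insert by auto
  then show ?case using av_ultra[of "f x" "sum f F"] insert.hyps by (simp add: max_def split: if_splits)
qed simp

lemma av_sum_less: "finite S \<Longrightarrow> (\<And>i. i \<in> S \<Longrightarrow> absv (f i) < b) \<Longrightarrow> b > 0 \<Longrightarrow> absv (sum f S) < b"
proof (induction S rule: finite_induct)
  case (insert x F)
  have "absv (f x) < b" "absv (sum f F) < b" using insert by auto
  then show ?case using av_ultra[of "f x" "sum f F"] insert.hyps by (simp add: max_def split: if_splits)
qed simp

lemma av_of_nat_le1: "absv (of_nat n :: 'k) \<le> 1"
proof (induction n)
  case (Suc n) then show ?case using av_ultra[of 1 "of_nat n"] by (simp add: max_def split: if_splits)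
qed simp

lemma av_of_int_le1: "absv (of_int n :: 'k) \<le> 1"
proof -
  have "of_int n = (if n \<ge> 0 then of_nat (nat n) else - of_nat (nat (-n)) :: 'k)"
    by (cases "n \<ge> 0") (auto simp: of_nat_nat)
  then show ?thesis using av_of_nat_le1 by (metis av_uminus)
qed

end


context padic begin

lemma av_nat_notdvd: "\<not> p dvd n \<Longrightarrow> absv (of_nat n :: 'k) = 1"
proof (induction n rule: less_induct)
  case (less n)
  show ?case
  proof (cases "n = 1")
    case True then show ?thesis by simp
  next
    case False
    have "n \<noteq> 0" using less.prems by (metis dvd_0_right)
    obtain q where q: "prime q" "q dvd n" using False prime_factor_nat by blast
    then obtain m where m: "n = q * m" by blast
    have "q \<noteq> p" using q less.prems by auto
    have "m > 0" using m \<open>n \<noteq> 0\<close> by (cases m) auto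
    then have "m < n" using m prime_gt_1_nat[OF q(1)] n_less_m_mult_n[of m q] by simp
    have "\<not> p dvd m" using less.prems m by auto
    then have "absv (of_nat m :: 'k) = 1" using less.IH \<open>m < n\<close> by blast
    then show ?thesis using m av_q[OF q(1) \<open>q \<noteq> p\<close>] by simp
  qed
qed

lemma av_nat_dvd: "p dvd n \<Longrightarrow> absv (of_nat n :: 'k) \<le> 1 / real p"
proof -
  assume "p dvd n" then obtain m where "n = p * m" by blast
  then have "absv (of_nat n :: 'k) = 1 / real p * absv (of_nat m :: 'k)" by (simp add: av_p)
  moreover have "absv (of_nat m :: 'k) \<le> 1" by (rule av_of_nat_le1)
  moreover have "1 / real p \<ge> 0" by simp
  ultimately show ?thesis using p_gt1 by (simp add: divide_right_mono)
qed

lemma av_of_int_nat: "absv (of_int n :: 'k) = absv (of_nat (nat \<bar>n\<bar>) :: 'k)"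
proof (cases "n \<ge> 0")
  case True then show ?thesis by (simp add: of_nat_nat)
next
  case False
  then have "(of_int n :: 'k) = - of_nat (nat \<bar>n\<bar>)" by (simp add: of_nat_nat)
  then show ?thesis by simp
qed

lemma av_int_notdvd: "\<not> int p dvd n \<Longrightarrow> absv (of_int n :: 'k) = 1"
  by (subst av_of_int_nat, rule av_nat_notdvd) simp

lemma av_int_dvd: "int p dvd n \<Longrightarrow> absv (of_int n :: 'k) \<le> 1 / real p"
  by (subst av_of_int_nat, rule av_nat_dvd) simp

lemma inv_p_lt1: "1 / real p < 1" using p_gt1 by simp

lemma av_int_lt1_iff: "absv (of_int n :: 'k) < 1 \<longleftrightarrow> int p dvd n"
proof
  assume "absv (of_int n :: 'k) < 1" then show "int p dvd n" using av_int_notdvd[of n] by linarith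
next
  assume "int p dvd n" then show "absv (of_int n :: 'k) < 1" using av_int_dvd[of n] inv_p_lt1 by linarith
qed

lemma av_nat_val: "n \<noteq> 0 \<Longrightarrow> \<exists>k::nat. absv (of_nat n :: 'k) = (1 / real p) ^ k"
proof (induction n rule: less_induct)
  case (less n)
  show ?case
  proof (cases "p dvd n")
    case True
    then obtain m where m: "n = p * m" by blast
    then have "m \<noteq> 0" "m < n" using less.prems p_gt1 by auto
    then obtain k where "absv (of_nat m :: 'k) = (1 / real p) ^ k" using less.IH by blast
    then have "absv (of_nat n :: 'k) = (1 / real p) ^ Suc k" using m by (simp add: av_p)
    then show ?thesis by blast
  next
    case False then show ?thesis using av_nat_notdvd by (metis power_0)
  qed
qed

end


context padic begin
lemma av_int_val: "n \<noteq> 0 \<Longrightarrow> \<exists>z::int. absv (of_int n :: 'k) = real p powr z"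
proof -
  assume "n \<noteq> 0"
  then obtain k where k: "absv (of_nat (nat \<bar>n\<bar>) :: 'k) = (1 / real p) ^ k" using av_nat_val[of "nat \<bar>n\<bar>"] by auto
  have "(1 / real p) ^ k = real p powr (- real k)" using p_gt1
    by (simp add: powr_minus powr_realpow power_one_over inverse_eq_divide)
  then have "absv (of_int n :: 'k) = real p powr (real_of_int (- int k))" using k av_of_int_nat[of n] by simp
  then show ?thesis by blast
qed

end


context padic begin
lemma av_rat_val: "r \<noteq> 0 \<Longrightarrow> \<exists>z::int. absv (of_rat r :: 'k) = real p powr z"
proof -
  assume r: "r \<noteq> 0"
  obtain a b where ab: "quotient_of r = (a, b)" by (cases "quotient_of r")
  have rab: "r = of_int a / of_int b" using quotient_of_div[OF ab] .
  have "b > 0" using quotient_of_denom_pos[OF ab] .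
  have "a \<noteq> 0" using r rab by auto
  have eq: "(of_rat r :: 'k) = of_int a / of_int b" unfolding rab by (simp add: of_rat_divide)
  obtain za :: int where za: "absv (of_int a :: 'k) = real p powr za" using av_int_val[OF \<open>a \<noteq> 0\<close>] by (elim exE)
  obtain zb :: int where zb: "absv (of_int b :: 'k) = real p powr zb" using av_int_val[of b] \<open>b > 0\<close> by auto
  have "absv (of_rat r :: 'k) = real p powr za / real p powr zb" unfolding eq av_divide za zb ..
  also have "\<dots> = real p powr (za - zb)" by (simp add: powr_diff)
  finally have "absv (of_rat r :: 'k) = real p powr (real_of_int (za - zb))" by simp
  then show ?thesis by blast
qed
end


context padic begin

abbreviation conv where "conv X L \<equiv> abs_converges absv X L"

lemma conv_def': "conv X L \<longleftrightarrow> (\<forall>\<epsilon>>0. \<exists>N. \<forall>n\<ge>N. absv (X n - L) < \<epsilon>)"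
  unfolding abs_converges_def ..

lemma conv_const: "conv (\<lambda>n. c) c" unfolding conv_def' by simp

lemma conv_unique: assumes "conv X L" "conv X M" shows "L = M"
proof (rule ccontr)
  assume "L \<noteq> M"
  then have e: "absv (L - M) > 0" by simp
  obtain N1 where N1: "\<forall>n\<ge>N1. absv (X n - L) < absv (L - M)" using assms(1) e unfolding conv_def' by blast
  obtain N2 where N2: "\<forall>n\<ge>N2. absv (X n - M) < absv (L - M)" using assms(2) e unfolding conv_def' by blast
  have a: "absv (X (max N1 N2) - L) < absv (L - M)" using N1 by simp
  have b: "absv (X (max N1 N2) - M) < absv (L - M)" using N2 by simp
  have "absv (L - M) \<le> max (absv (L - X (max N1 N2))) (absv (X (max N1 N2) - M))" by (rule av_trans)
  then show False using a b av_diff_comm[of L "X (max N1 N2)"] by linarith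
qed

lemma conv_eventually: assumes "conv X L" "\<forall>n\<ge>N0. X n = Y n" shows "conv Y L"
  unfolding conv_def'
proof (intro allI impI)
  fix \<epsilon> :: real assume "\<epsilon> > 0"
  then obtain N where "\<forall>n\<ge>N. absv (X n - L) < \<epsilon>" using assms(1) unfolding conv_def' by blast
  then have "\<forall>n\<ge>max N N0. absv (Y n - L) < \<epsilon>" using assms(2) by auto
  then show "\<exists>N. \<forall>n\<ge>N. absv (Y n - L) < \<epsilon>" by blast
qed

lemma conv_add: assumes "conv X L" "conv Y M" shows "conv (\<lambda>n. X n + Y n) (L + M)"
  unfolding conv_def'
proof (intro allI impI)
  fix \<epsilon> :: real assume "\<epsilon> > 0"
  obtain N1 where N1: "\<forall>n\<ge>N1. absv (X n - L) < \<epsilon>" using assms(1) \<open>\<epsilon> > 0\<close> unfolding conv_def' by blast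
  obtain N2 where N2: "\<forall>n\<ge>N2. absv (Y n - M) < \<epsilon>" using assms(2) \<open>\<epsilon> > 0\<close> unfolding conv_def' by blast
  have "\<forall>n\<ge>max N1 N2. absv (X n + Y n - (L + M)) < \<epsilon>"
  proof (intro allI impI)
    fix n assume "n \<ge> max N1 N2"
    then have "absv (X n - L) < \<epsilon>" "absv (Y n - M) < \<epsilon>" using N1 N2 by auto
    moreover have eq: "X n + Y n - (L + M) = (X n - L) + (Y n - M)" by simp
    ultimately show "absv (X n + Y n - (L + M)) < \<epsilon>" unfolding eq using av_ultra[of "X n - L" "Y n - M"]
      by (meson le_less_trans max_less_iff_conj)
  qed
  then show "\<exists>N. \<forall>n\<ge>N. absv (X n + Y n - (L + M)) < \<epsilon>" by blast
qed

lemma conv_neg: assumes "conv X L" shows "conv (\<lambda>n. - X n) (- L)"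
  using assms unfolding conv_def'
  by (metis av_uminus minus_diff_eq minus_diff_minus)

lemma conv_diff: assumes "conv X L" "conv Y M" shows "conv (\<lambda>n. X n - Y n) (L - M)"
  using conv_add[OF assms(1) conv_neg[OF assms(2)]] by simp

lemma conv_bounded: assumes "conv X L" shows "\<exists>N. \<forall>n\<ge>N. absv (X n) \<le> max (absv L) 1"
proof -
  obtain N where N: "\<forall>n\<ge>N. absv (X n - L) < 1" using assms unfolding conv_def' by (meson zero_less_one)
  have "\<forall>n\<ge>N. absv (X n) \<le> max (absv L) 1"
  proof (intro allI impI)
    fix n assume "n \<ge> N"
    then have "absv (X n - L) < 1" using N by blast
    then show "absv (X n) \<le> max (absv L) 1" using av_ultra[of "X n - L" L] by simp
  qed
  then show ?thesis by blast
qed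

lemma conv_mult: assumes "conv X L" "conv Y M" shows "conv (\<lambda>n. X n * Y n) (L * M)"
  unfolding conv_def'
proof (intro allI impI)
  fix \<epsilon> :: real assume e: "\<epsilon> > 0"
  define B where "B = max (absv L) 1"
  have B: "B \<ge> 1" unfolding B_def by simp
  obtain N0 where N0: "\<forall>n\<ge>N0. absv (X n) \<le> B" using conv_bounded[OF assms(1)] unfolding B_def by blast
  have e1: "\<epsilon> / B > 0" using e B by simp
  have e2: "\<epsilon> / (absv M + 1) > 0" using e by (simp add: add_nonneg_pos)
  obtain N1 where N1: "\<forall>n\<ge>N1. absv (X n - L) < \<epsilon> / (absv M + 1)" using assms(1) e2 unfolding conv_def' by blast
  obtain N2 where N2: "\<forall>n\<ge>N2. absv (Y n - M) < \<epsilon> / B" using assms(2) e1 unfolding conv_def' by blast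
  have "\<forall>n\<ge>max N0 (max N1 N2). absv (X n * Y n - L * M) < \<epsilon>"
  proof (intro allI impI)
    fix n assume "n \<ge> max N0 (max N1 N2)"
    then have h: "absv (X n) \<le> B" "absv (X n - L) < \<epsilon> / (absv M + 1)" "absv (Y n - M) < \<epsilon> / B"
      using N0 N1 N2 by auto
    have t1: "absv (X n * (Y n - M)) < \<epsilon>"
    proof -
      have "absv (X n * (Y n - M)) = absv (X n) * absv (Y n - M)" by simp
      also have "\<dots> \<le> B * absv (Y n - M)" using h(1) by (simp add: mult_right_mono)
      also have "\<dots> < B * (\<epsilon> / B)" using h(3) B by (intro mult_strict_left_mono) auto
      also have "\<dots> = \<epsilon>" using B by simp
      finally show ?thesis .
    qed
    have t2: "absv ((X n - L) * M) < \<epsilon>"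
    proof -
      have "absv ((X n - L) * M) = absv (X n - L) * absv M" by simp
      also have "\<dots> \<le> (\<epsilon> / (absv M + 1)) * absv M" using h(2) by (intro mult_right_mono) auto
      also have "\<dots> < \<epsilon>"
      proof -
        have pos: "absv M + 1 > 0" by (simp add: add_nonneg_pos)
        have "\<epsilon> * absv M < \<epsilon> * (absv M + 1)" using e by simp
        then have "\<epsilon> * absv M / (absv M + 1) < \<epsilon>" using pos by (simp add: pos_divide_less_eq mult.commute)
        then show ?thesis by simp
      qed
      finally show ?thesis .
    qed
    have "X n * Y n - L * M = X n * (Y n - M) + (X n - L) * M" by (simp add: algebra_simps)
    then show "absv (X n * Y n - L * M) < \<epsilon>" using av_ultra[of "X n * (Y n - M)" "(X n - L) * M"] t1 t2 by simp
  qed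
  then show "\<exists>N. \<forall>n\<ge>N. absv (X n * Y n - L * M) < \<epsilon>" by blast
qed

lemma conv_sum: "finite S \<Longrightarrow> (\<And>i. i \<in> S \<Longrightarrow> conv (X i) (L i)) \<Longrightarrow> conv (\<lambda>n. \<Sum>i\<in>S. X i n) (\<Sum>i\<in>S. L i)"
proof (induction S rule: finite_induct)
  case empty then show ?case by (simp add: conv_const)
next
  case (insert x F)
  then show ?case using conv_add[of "X x" "L x" "\<lambda>n. \<Sum>i\<in>F. X i n" "\<Sum>i\<in>F. L i"] by simp
qed

lemma conv_power: "conv X L \<Longrightarrow> conv (\<lambda>n. X n ^ k) (L ^ k)"
proof (induction k)
  case 0 then show ?case by (simp add: conv_const)
next
  case (Suc k) then show ?case using conv_mult[of X L "\<lambda>n. X n ^ k" "L ^ k"] by simp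
qed

lemma conv_poly: "conv X x \<Longrightarrow> conv (\<lambda>n. poly c (X n)) (poly c x)"
proof (induction c)
  case 0 then show ?case by (simp add: conv_const)
next
  case (pCons a c)
  then show ?case using conv_add[OF conv_const[of a] conv_mult[of X x "\<lambda>n. poly c (X n)" "poly c x"]] by simp
qed

lemma conv_zero: "conv X 0 \<longleftrightarrow> (\<forall>\<epsilon>>0. \<exists>N. \<forall>n\<ge>N. absv (X n) < \<epsilon>)"
  unfolding conv_def' by simp

definition cauchy where "cauchy X \<longleftrightarrow> (\<forall>\<epsilon>>0. \<exists>N. \<forall>m\<ge>N. \<forall>n\<ge>N. absv (X m - X n) < \<epsilon>)"

lemma geom_dist: assumes "\<And>n. absv (X (Suc n) - X n) \<le> C * \<rho> ^ n" "0 \<le> \<rho>" "\<rho> \<le> 1" "C \<ge> 0"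
  shows "m \<ge> n \<Longrightarrow> absv (X m - X n) \<le> C * \<rho> ^ n"
proof (induction m rule: dec_induct)
  case base then show ?case using assms by simp
next
  case (step m)
  have "C * \<rho> ^ m \<le> C * \<rho> ^ n" using assms step.hyps by (simp add: mult_left_mono power_decreasing)
  then have "absv (X (Suc m) - X m) \<le> C * \<rho> ^ n" using assms(1)[of m] by linarith
  then show ?case using av_trans[of "X (Suc m)" "X n" "X m"] step.IH by simp
qed

lemma geom_conv: assumes "\<And>n. absv (X (Suc n) - X n) \<le> C * \<rho> ^ n" "0 \<le> \<rho>" "\<rho> < 1" "C \<ge> 0"
  shows "\<exists>L. conv X L"
proof (rule av_complete, intro allI impI)
  fix \<epsilon> :: real assume e: "\<epsilon> > 0"
  obtain N where N: "\<rho> ^ N < \<epsilon> / (C + 1)"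
  proof (cases "\<rho> = 0")
    case True then show ?thesis using that[of 1] e assms(4) by (simp add: add_nonneg_pos)
  next
    case False then show ?thesis using that real_arch_pow_inv[of "\<epsilon> / (C + 1)" \<rho>] assms e
        by (auto simp add: add_nonneg_pos)
  qed
  have CN: "C * \<rho> ^ N < \<epsilon>"
  proof -
    have "C * \<rho> ^ N \<le> (C + 1) * \<rho> ^ N" using assms by (simp add: mult_right_mono)
    also have "\<dots> < (C + 1) * (\<epsilon> / (C + 1))" using N assms by (intro mult_strict_left_mono) auto
    also have "\<dots> = \<epsilon>" using assms by simp
    finally show ?thesis .
  qed
  have "\<forall>m\<ge>N. \<forall>n\<ge>N. absv (X m - X n) < \<epsilon>"
  proof (intro allI impI)
    fix m n assume mn: "m \<ge> N" "n \<ge> N"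
    have pd: "\<And>k. k \<ge> N \<Longrightarrow> C * \<rho> ^ k \<le> C * \<rho> ^ N" using assms by (simp add: mult_left_mono power_decreasing)
    show "absv (X m - X n) < \<epsilon>"
    proof (cases "m \<ge> n")
      case True then show ?thesis using geom_dist[OF assms(1,2) _ assms(4), of n m] assms(3) pd[OF mn(2)] CN by linarith
    next
      case False then show ?thesis using geom_dist[OF assms(1,2) _ assms(4), of m n] assms(3) pd[OF mn(1)] CN av_diff_comm[of "X m" "X n"] by linarith
    qed
  qed
  then show "\<exists>N. \<forall>m\<ge>N. \<forall>n\<ge>N. absv (X m - X n) < \<epsilon>" by blast
qed

end


context padic begin

lemma prime_int_p: "prime (int p)" using prime_p by simp

lemma inv_mod: assumes "\<not> int p dvd n" shows "\<exists>u. int p dvd (u * n - 1)"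
proof -
  have "coprime (int p) n" using prime_imp_coprime[OF prime_int_p assms] .
  then have "gcd n (int p) = 1" by (simp add: coprime_imp_gcd_eq_1 coprime_commute)
  then obtain u v :: int where "u * n + v * int p = 1" using bezout_int[of n "int p"] by auto
  then have "u * n - 1 = int p * (- v)" by (simp add: algebra_simps)
  then have "int p dvd (u * n - 1)" by (rule dvdI)
  then show ?thesis by blast
qed

lemma Qp_def': "x \<in> Qp_in absv \<longleftrightarrow> (\<exists>r::nat \<Rightarrow> rat. conv (\<lambda>n. of_rat (r n)) x)"
  unfolding Qp_in_def by simp

lemma Qp_rat: "of_rat q \<in> Qp_in absv"
  unfolding Qp_def' using conv_const[of "of_rat q"] by (intro exI[of _ "\<lambda>n. q"])

lemma Qp_int: "of_int n \<in> Qp_in absv"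
  using Qp_rat[of "of_int n"] by simp

lemma Qp_nat: "of_nat n \<in> Qp_in absv"
  using Qp_rat[of "of_nat n"] by simp

lemma Qp_0: "0 \<in> Qp_in absv" using Qp_nat[of 0] by simp
lemma Qp_1: "1 \<in> Qp_in absv" using Qp_nat[of 1] by simp

lemma Qp_add: "x \<in> Qp_in absv \<Longrightarrow> y \<in> Qp_in absv \<Longrightarrow> x + y \<in> Qp_in absv"
proof -
  assume "x \<in> Qp_in absv" "y \<in> Qp_in absv"
  then obtain r s where "conv (\<lambda>n. of_rat (r n)) x" "conv (\<lambda>n. of_rat (s n)) y" unfolding Qp_def' by blast
  then have "conv (\<lambda>n. of_rat (r n + s n)) (x + y)" using conv_add by (simp add: of_rat_add)
  then show ?thesis unfolding Qp_def' by (intro exI[of _ "\<lambda>n. r n + s n"])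
qed

lemma Qp_neg: "x \<in> Qp_in absv \<Longrightarrow> - x \<in> Qp_in absv"
proof -
  assume "x \<in> Qp_in absv"
  then obtain r where "conv (\<lambda>n. of_rat (r n)) x" unfolding Qp_def' by blast
  then have "conv (\<lambda>n. of_rat (- r n)) (- x)" using conv_neg by (simp add: of_rat_minus)
  then show ?thesis unfolding Qp_def' by (intro exI[of _ "\<lambda>n. - r n"])
qed

lemma Qp_diff: "x \<in> Qp_in absv \<Longrightarrow> y \<in> Qp_in absv \<Longrightarrow> x - y \<in> Qp_in absv"
  using Qp_add[of x "-y"] Qp_neg[of y] by simp

lemma Qp_mult: "x \<in> Qp_in absv \<Longrightarrow> y \<in> Qp_in absv \<Longrightarrow> x * y \<in> Qp_in absv"
proof -
  assume "x \<in> Qp_in absv" "y \<in> Qp_in absv"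
  then obtain r s where "conv (\<lambda>n. of_rat (r n)) x" "conv (\<lambda>n. of_rat (s n)) y" unfolding Qp_def' by blast
  then have "conv (\<lambda>n. of_rat (r n * s n)) (x * y)" using conv_mult by (simp add: of_rat_mult)
  then show ?thesis unfolding Qp_def' by (intro exI[of _ "\<lambda>n. r n * s n"])
qed

lemma conv_inverse: assumes "conv X L" "L \<noteq> 0" shows "conv (\<lambda>n. inverse (X n)) (inverse L)"
  unfolding conv_def'
proof (intro allI impI)
  fix \<epsilon> :: real assume e: "\<epsilon> > 0"
  have aL: "absv L > 0" using assms by simp
  have e': "\<epsilon> * absv L * absv L > 0" using e aL by simp
  obtain N1 where N1: "\<forall>n\<ge>N1. absv (X n - L) < absv L" using assms(1) aL unfolding conv_def' by blast
  obtain N2 where N2: "\<forall>n\<ge>N2. absv (X n - L) < \<epsilon> * absv L * absv L" using assms(1) e' unfolding conv_def' by blast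
  have "\<forall>n\<ge>max N1 N2. absv (inverse (X n) - inverse L) < \<epsilon>"
  proof (intro allI impI)
    fix n assume "n \<ge> max N1 N2"
    then have h: "absv (X n - L) < absv L" "absv (X n - L) < \<epsilon> * absv L * absv L" using N1 N2 by auto
    have "absv (L + (X n - L)) = absv L" using av_add_strict h(1) by blast
    then have XL: "absv (X n) = absv L" by simp
    then have "X n \<noteq> 0" using aL by auto
    then have "inverse (X n) - inverse L = (L - X n) / (X n * L)" using assms(2) by (simp add: field_simps)
    then have "absv (inverse (X n) - inverse L) = absv (X n - L) / (absv L * absv L)"
      using XL av_diff_comm[of L "X n"] by (simp add: av_divide)
    also have "\<dots> < \<epsilon>" using h(2) aL by (simp add: pos_divide_less_eq mult.assoc)
    finally show "absv (inverse (X n) - inverse L) < \<epsilon>" .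
  qed
  then show "\<exists>N. \<forall>n\<ge>N. absv (inverse (X n) - inverse L) < \<epsilon>" by blast
qed

lemma Qp_inverse: "x \<in> Qp_in absv \<Longrightarrow> inverse x \<in> Qp_in absv"
proof (cases "x = 0")
  case True then show ?thesis using Qp_0 by simp
next
  case False
  assume "x \<in> Qp_in absv"
  then obtain r where "conv (\<lambda>n. of_rat (r n)) x" unfolding Qp_def' by blast
  then have "conv (\<lambda>n. of_rat (inverse (r n))) (inverse x)" using conv_inverse False by (simp add: of_rat_inverse)
  then show ?thesis unfolding Qp_def' by (intro exI[of _ "\<lambda>n. inverse (r n)"])
qed

lemma Qp_divide: "x \<in> Qp_in absv \<Longrightarrow> y \<in> Qp_in absv \<Longrightarrow> x / y \<in> Qp_in absv"
  using Qp_mult Qp_inverse by (simp add: divide_inverse)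

lemma Qp_closed: assumes "\<forall>n. X n \<in> Qp_in absv" "conv X L" shows "L \<in> Qp_in absv"
proof -
  have "\<forall>n. \<exists>q::rat. absv (X n - of_rat q) < 1 / real (Suc n)"
  proof
    fix n
    obtain r where r: "conv (\<lambda>k. of_rat (r k)) (X n)" using assms(1) unfolding Qp_def' by blast
    have "1 / real (Suc n) > 0" by simp
    then obtain N where "\<forall>k\<ge>N. absv (of_rat (r k) - X n) < 1 / real (Suc n)" using r unfolding conv_def' by blast
    then have "absv (of_rat (r N) - X n) < 1 / real (Suc n)" by blast
    then have "absv (X n - of_rat (r N)) < 1 / real (Suc n)" using av_diff_comm by simp
    then show "\<exists>q::rat. absv (X n - of_rat q) < 1 / real (Suc n)" by blast
  qed
  then obtain q where q: "\<And>n. absv (X n - of_rat (q n)) < 1 / real (Suc n)" by metis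
  have "conv (\<lambda>n. of_rat (q n)) L" unfolding conv_def'
  proof (intro allI impI)
    fix \<epsilon> :: real assume e: "\<epsilon> > 0"
    obtain N1 where N1: "\<forall>n\<ge>N1. absv (X n - L) < \<epsilon>" using assms(2) e unfolding conv_def' by blast
    obtain N2 where N2: "1 / real (Suc N2) < \<epsilon>" using e by (metis nat_approx_posE)
    have "\<forall>n\<ge>max N1 N2. absv (of_rat (q n) - L) < \<epsilon>"
    proof (intro allI impI)
      fix n assume n: "n \<ge> max N1 N2"
      have "1 / real (Suc n) \<le> 1 / real (Suc N2)" using n by (simp add: frac_le)
      then have a: "absv (of_rat (q n) - X n) < \<epsilon>" using q[of n] N2 av_diff_comm[of "of_rat (q n)" "X n"] by linarith
      have b: "absv (X n - L) < \<epsilon>" using N1 n by auto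
      show "absv (of_rat (q n) - L) < \<epsilon>" using av_trans[of "of_rat (q n)" L "X n"] a b by linarith
    qed
    then show "\<exists>N. \<forall>n\<ge>N. absv (of_rat (q n) - L) < \<epsilon>" by blast
  qed
  then show ?thesis unfolding Qp_def' by blast
qed

lemma conv_le1: assumes "\<forall>n. absv (X n) \<le> 1" "conv X L" shows "absv L \<le> 1"
proof -
  obtain N where "\<forall>n\<ge>N. absv (X n - L) < 1" using assms(2) unfolding conv_def' by (meson zero_less_one)
  then have "absv (X N - L) < 1" by blast
  moreover have "absv (X N) \<le> 1" using assms(1) by blast
  ultimately show ?thesis using av_trans[of L 0 "X N"] av_diff_comm[of "X N" L] by simp
qed

lemma Zp_closed: assumes "\<forall>n. X n \<in> Zp_in absv" "conv X L" shows "L \<in> Zp_in absv"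
  using assms Qp_closed[of X L] conv_le1[of X L] unfolding Zp_in_def by auto

lemma Qp_val: assumes "x \<in> Qp_in absv" "x \<noteq> 0" shows "\<exists>z::int. absv x = real p powr z"
proof -
  obtain r where r: "conv (\<lambda>n. of_rat (r n)) x" using assms(1) unfolding Qp_def' by blast
  have "absv x > 0" using assms(2) by simp
  then obtain N where N: "\<forall>n\<ge>N. absv (of_rat (r n) - x) < absv x" using r unfolding conv_def' by blast
  then have "absv (x + (of_rat (r N) - x)) = absv x" using av_add_strict by blast
  then have e: "absv (of_rat (r N) :: 'k) = absv x" by simp
  then have "r N \<noteq> 0" using assms(2) by auto
  then obtain z :: int where "absv (of_rat (r N) :: 'k) = real p powr z" using av_rat_val by blast
  then show ?thesis using e by auto
qed

lemma Zp_res: assumes "x \<in> Qp_in absv" "absv x \<le> 1" shows "\<exists>n::int. absv (x - of_int n) < 1"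
proof -
  obtain r where r: "conv (\<lambda>n. of_rat (r n)) x" using assms(1) unfolding Qp_def' by blast
  obtain N where N: "\<forall>n\<ge>N. absv (of_rat (r n) - x) < 1" using r unfolding conv_def' by (meson zero_less_one)
  define q where "q = r N"
  have "absv (of_rat q - x) < 1" using N unfolding q_def by blast
  then have xq: "absv (x - of_rat q) < 1" using av_diff_comm by simp
  have q1: "absv (of_rat q :: 'k) \<le> 1" using av_trans[of "of_rat q" 0 x] xq assms(2) av_diff_comm[of x "of_rat q"] by simp
  obtain a b where ab: "quotient_of q = (a, b)" by (cases "quotient_of q")
  have qab: "q = of_int a / of_int b" using quotient_of_div[OF ab] .
  have "b > 0" using quotient_of_denom_pos[OF ab] .
  have cop: "coprime a b" using quotient_of_coprime[OF ab] .
  have eq: "(of_rat q :: 'k) = of_int a / of_int b" unfolding qab by (simp add: of_rat_divide)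
  have nb: "\<not> int p dvd b"
  proof
    assume pb: "int p dvd b"
    have "\<not> int p dvd a"
    proof
      assume "int p dvd a"
      then have "is_unit (int p)" by (rule coprime_common_divisor[OF cop _ pb])
      then show False using prime_int_p not_prime_unit by blast
    qed
    then have "absv (of_int a :: 'k) = 1" by (rule av_int_notdvd)
    moreover have "absv (of_int b :: 'k) < 1" using pb av_int_lt1_iff by blast
    moreover have "absv (of_int b :: 'k) > 0" using \<open>b > 0\<close> by simp
    ultimately have "absv (of_rat q :: 'k) > 1" unfolding eq av_divide by simp
    then show False using q1 by simp
  qed
  then obtain u where u: "int p dvd (u * b - 1)" using inv_mod by blast
  have "int p dvd (a - (a * u) * b)"
  proof -
    have "a - (a * u) * b = - a * (u * b - 1)" by (simp add: algebra_simps)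
    then show ?thesis using u by simp
  qed
  then have d: "absv (of_int (a - (a * u) * b) :: 'k) < 1" using av_int_lt1_iff by blast
  have b1: "absv (of_int b :: 'k) = 1" using av_int_notdvd nb by blast
  have "of_rat q - of_int (a * u) = (of_int (a - (a * u) * b) :: 'k) / of_int b"
    using \<open>b > 0\<close> unfolding eq by (simp add: field_simps)
  then have "absv (of_rat q - of_int (a * u) :: 'k) < 1" using d b1 by (simp add: av_divide)
  then have "absv (x - of_int (a * u)) < 1" using av_trans[of x "of_int (a * u)" "of_rat q"] xq by simp
  then show ?thesis by blast
qed

end


definition subfield :: "'k::field set \<Rightarrow> bool" where
  "subfield F \<longleftrightarrow> 0 \<in> F \<and> 1 \<in> F \<and> (\<forall>x\<in>F. \<forall>y\<in>F. x + y \<in> F \<and> x * y \<in> F \<and> - x \<in> F \<and> inverse x \<in> F)"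

lemma subfield_ops:
  assumes "subfield F" "x \<in> F" "y \<in> F"
  shows "x + y \<in> F" "x * y \<in> F" "- x \<in> F" "inverse x \<in> F" "x - y \<in> F" "x / y \<in> F" "0 \<in> F" "1 \<in> F"
  using assms unfolding subfield_def by (auto simp: divide_inverse) (metis diff_conv_add_uminus)

lemma subfield_0: "subfield F \<Longrightarrow> 0 \<in> F" by (simp add: subfield_def)
lemma subfield_1: "subfield F \<Longrightarrow> 1 \<in> F" by (simp add: subfield_def)

lemma subfield_sum: assumes F: "subfield F" shows "finite S \<Longrightarrow> (\<And>i. i \<in> S \<Longrightarrow> f i \<in> F) \<Longrightarrow> sum f S \<in> F"
proof (induction S rule: finite_induct)
  case empty then show ?case using subfield_0[OF F] by simp
next
  case (insert x S) then show ?case using subfield_ops(1)[OF F] by simp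
qed

definition swp :: "nat \<Rightarrow> nat \<Rightarrow> nat \<Rightarrow> nat" where
  "swp a b k = (if k = a then b else if k = b then a else k)"

lemma swp_inv[simp]: "swp a b (swp a b k) = k" unfolding swp_def by auto

lemma swp_bij: "a < m \<Longrightarrow> b < m \<Longrightarrow> bij_betw (swp a b) {..<m} {..<m}"
  by (rule bij_betw_byWitness[where f'="swp a b"]) (auto simp: swp_def)

lemma sum_swp: "a < m \<Longrightarrow> b < m \<Longrightarrow> (\<Sum>k<m. f (swp a b k)) = (\<Sum>k<m. f k)"
  using sum.reindex_bij_betw[OF swp_bij, of a m b f] by simp

lemma dep_aux:
  fixes v w :: "nat \<Rightarrow> 'k::field"
  assumes F: "subfield F"
  shows "n < m \<Longrightarrow> (\<forall>k<m. \<forall>i<n. M k i \<in> F) \<Longrightarrow> (\<forall>k<m. v k = (\<Sum>i<n. M k i * w i))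
    \<Longrightarrow> \<exists>c. (\<forall>k<m. c k \<in> F) \<and> (\<exists>k<m. c k \<noteq> 0) \<and> (\<Sum>k<m. c k * v k) = 0"
proof (induction n arbitrary: m v M)
  case 0
  have F01: "0 \<in> F" "1 \<in> F" using F unfolding subfield_def by auto
  show ?case
    apply (rule exI[of _ "\<lambda>k. if k = 0 then 1 else 0"])
    using 0 F01 by auto
next
  case (Suc n)
  show ?case
  proof (cases "\<forall>k<m. M k n = 0")
    case True
    have "\<forall>k<m. v k = (\<Sum>i<n. M k i * w i)" using Suc.prems True by simp
    then show ?thesis using Suc.IH[of m M v] Suc.prems by auto
  next
    case False
    then obtain k0 where k0: "k0 < m" "M k0 n \<noteq> 0" by blast
    define t where "t = m - 1"
    have tm: "t < m" "m = Suc t" "n < t" using Suc.prems(1) unfolding t_def by auto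
    define \<pi> where "\<pi> = swp k0 t"
    have \<pi>m: "\<And>k. k < m \<Longrightarrow> \<pi> k < m" unfolding \<pi>_def swp_def using k0 tm by auto
    define v' where "v' k = v (\<pi> k)" for k
    define M' where "M' k i = M (\<pi> k) i" for k i
    have Mt: "M' t n \<noteq> 0" unfolding M'_def \<pi>_def swp_def using k0 by auto
    have M'F: "\<forall>k<m. \<forall>i<Suc n. M' k i \<in> F" using Suc.prems(2) \<pi>m unfolding M'_def by auto
    have v'e: "\<forall>k<m. v' k = (\<Sum>i<Suc n. M' k i * w i)" using Suc.prems(3) \<pi>m unfolding M'_def v'_def by auto
    define r where "r k = M' k n / M' t n" for k
    have rF: "\<forall>k<m. r k \<in> F" unfolding r_def using M'F tm subfield_ops(6)[OF F] by auto
    define u where "u k = v' k - r k * v' t" for k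
    define N where "N k i = M' k i - r k * M' t i" for k i
    have NF: "\<forall>k<t. \<forall>i<n. N k i \<in> F" unfolding N_def using M'F rF tm subfield_ops[OF F] by auto
    have ue: "\<forall>k<t. u k = (\<Sum>i<n. N k i * w i)"
    proof (intro allI impI)
      fix k assume k: "k < t"
      have "u k = (\<Sum>i<Suc n. M' k i * w i) - r k * (\<Sum>i<Suc n. M' t i * w i)"
        unfolding u_def using v'e k tm by auto
      also have "\<dots> = (\<Sum>i<Suc n. N k i * w i)" unfolding N_def
        by (simp add: sum_distrib_left sum_subtractf algebra_simps)
      also have "\<dots> = (\<Sum>i<n. N k i * w i) + N k n * w n" by simp
      also have "N k n = 0" unfolding N_def r_def using Mt by simp
      finally show "u k = (\<Sum>i<n. N k i * w i)" by simp
    qed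
    obtain c' where c': "\<forall>k<t. c' k \<in> F" "\<exists>k<t. c' k \<noteq> 0" "(\<Sum>k<t. c' k * u k) = 0"
      using Suc.IH[of t N u] tm NF ue by blast
    define c where "c k = (if k < t then c' k else - (\<Sum>j<t. c' j * r j))" for k
    have cF: "\<forall>k<m. c k \<in> F"
    proof (intro allI impI)
      fix k assume "k < m"
      show "c k \<in> F"
      proof (cases "k < t")
        case True then show ?thesis unfolding c_def using c' by simp
      next
        case False
        have "(\<Sum>j<t. c' j * r j) \<in> F" using subfield_sum[OF F, of "{..<t}"] c'(1) rF tm subfield_ops(2)[OF F] by auto
        then show ?thesis unfolding c_def using False subfield_ops(3)[OF F] by simp
      qed
    qed
    have csum: "(\<Sum>k<m. c k * v' k) = 0"
    proof -
      have "(\<Sum>k<m. c k * v' k) = (\<Sum>k<t. c' k * v' k) + c t * v' t" unfolding c_def using tm by simp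
      also have "(\<Sum>k<t. c' k * v' k) = (\<Sum>k<t. c' k * u k) + (\<Sum>k<t. c' k * r k) * v' t"
      proof -
        have "(\<Sum>k<t. c' k * u k) = (\<Sum>k<t. c' k * v' k) - (\<Sum>k<t. c' k * r k) * v' t"
          unfolding u_def by (simp add: right_diff_distrib sum_subtractf sum_distrib_right mult.assoc)
        then show ?thesis by simp
      qed
      also have "c t = - (\<Sum>j<t. c' j * r j)" unfolding c_def by simp
      finally show ?thesis using c'(3) by simp
    qed
    define c'' where "c'' k = c (\<pi> k)" for k
    have "(\<Sum>k<m. c'' k * v k) = (\<Sum>k<m. c'' (\<pi> k) * v (\<pi> k))"
      using sum_swp[OF k0(1) tm(1), of "\<lambda>k. c'' k * v k"] unfolding \<pi>_def by simp
    also have "\<dots> = (\<Sum>k<m. c k * v' k)" unfolding c''_def v'_def \<pi>_def by simp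
    finally have s0: "(\<Sum>k<m. c'' k * v k) = 0" using csum by simp
    obtain k1 where k1: "k1 < t" "c' k1 \<noteq> 0" using c'(2) by blast
    have "c'' (\<pi> k1) \<noteq> 0" unfolding c''_def \<pi>_def using k1 c_def by simp
    moreover have "\<pi> k1 < m" using \<pi>m k1 tm by simp
    moreover have "\<forall>k<m. c'' k \<in> F" unfolding c''_def using cF \<pi>m by simp
    ultimately show ?thesis using s0 by blast
  qed
qed



locale padic_ext = padic p absv for p and absv :: "'k::field_char_0 \<Rightarrow> real" +
  fixes e d :: nat
  assumes e_pos: "e > 0"
  and vg: "{absv x | x. x \<noteq> 0} = {real p powr (real_of_int k / real e) | k. True}"
  and deg: "ext_degree (Qp_in absv) d"
begin

lemma Qp_subfield: "subfield (Qp_in absv)"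
  unfolding subfield_def by (simp add: Qp_0 Qp_1 Qp_add Qp_mult Qp_neg Qp_inverse)

lemma val_form: "x \<noteq> 0 \<Longrightarrow> \<exists>k::int. absv x = real p powr (real_of_int k / real e)"
proof -
  assume "x \<noteq> 0"
  then have "absv x \<in> {absv x | x. x \<noteq> 0}" by blast
  then show ?thesis unfolding vg by blast
qed

lemma pi_ex: "\<exists>\<pi>. \<pi> \<noteq> 0 \<and> absv \<pi> = real p powr (- 1 / real e)"
proof -
  have "real p powr (- 1 / real e) \<in> {real p powr (real_of_int k / real e) | k. True}"
    by (rule CollectI, rule exI[of _ "-1"]) simp
  then have "real p powr (- 1 / real e) \<in> {absv x | x. x \<noteq> 0}" unfolding vg .
  then obtain x where "real p powr (- 1 / real e) = absv x" "x \<noteq> 0" by blast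
  then show ?thesis by (intro exI[of _ x]) simp
qed

lemma p_real_gt1: "real p > 1" using p_gt1 by simp

lemma disc: assumes "x \<noteq> 0" "absv x < 1" shows "absv x \<le> real p powr (- 1 / real e)"
proof -
  obtain k :: int where k: "absv x = real p powr (real_of_int k / real e)" using val_form assms(1) by blast
  have "real p powr (real_of_int k / real e) < real p powr 0" using k assms(2) p_real_gt1 by simp
  then have "real_of_int k / real e < 0" using powr_less_cancel_iff[OF p_real_gt1] by blast
  then have "k < 0" using e_pos by (simp add: divide_less_0_iff)
  then have "real_of_int k \<le> -1" by simp
  then have "real_of_int k / real e \<le> (-1) / real e" by (rule divide_right_mono) (use e_pos in auto)
  then show ?thesis using k p_real_gt1 by simp
qed

definition RI :: "nat \<Rightarrow> (nat \<Rightarrow> 'k) \<Rightarrow> bool" where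
  "RI t r \<longleftrightarrow> (\<forall>j<t. absv (r j) \<le> 1) \<and>
     (\<forall>n::nat \<Rightarrow> int. absv (\<Sum>j<t. of_int (n j) * r j) < 1 \<longrightarrow> (\<forall>j<t. int p dvd n j))"

lemma IND1:
  assumes ri: "RI t r" and cF: "\<forall>j<t. c j \<in> Qp_in absv" and nz: "\<exists>j<t. c j \<noteq> 0"
  shows "\<exists>z::int. absv (\<Sum>j<t. c j * r j) = real p powr z"
proof -
  define A where "A = (\<lambda>j. absv (c j)) ` {..<t}"
  have "t > 0" using nz by auto
  then have Afin: "finite A" "A \<noteq> {}" unfolding A_def by auto
  obtain j0 where j0: "j0 < t" "absv (c j0) = Max A" using Max_in[OF Afin] unfolding A_def by auto
  have jmax: "\<And>j. j < t \<Longrightarrow> absv (c j) \<le> absv (c j0)" using Max_ge[OF Afin(1)] j0(2) unfolding A_def by auto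
  define c0 where "c0 = c j0"
  have c0nz: "c0 \<noteq> 0"
  proof
    assume "c0 = 0"
    have "\<And>j. j < t \<Longrightarrow> c j = 0"
    proof -
      fix j assume "j < t"
      then have "absv (c j) \<le> absv c0" using jmax unfolding c0_def by blast
      then have "absv (c j) \<le> 0" using \<open>c0 = 0\<close> by simp
      then show "c j = 0" using av_nonneg[of "c j"] by simp
    qed
    then show False using nz by blast
  qed
  have c0F: "c0 \<in> Qp_in absv" unfolding c0_def using cF j0 by blast
  obtain z :: int where z: "absv c0 = real p powr z" using Qp_val[OF c0F c0nz] by blast
  define c' where "c' j = c j / c0" for j
  have c'F: "\<And>j. j < t \<Longrightarrow> c' j \<in> Qp_in absv" unfolding c'_def using cF c0F Qp_divide by blast
  have c'1: "\<And>j. j < t \<Longrightarrow> absv (c' j) \<le> 1" unfolding c'_def using jmax c0nz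
    by (simp add: av_divide c0_def)
  have "\<forall>j. \<exists>m::int. j < t \<longrightarrow> absv (c' j - of_int m) < 1" using Zp_res c'F c'1 by blast
  then obtain n :: "nat \<Rightarrow> int" where n0: "\<forall>j. j < t \<longrightarrow> absv (c' j - of_int (n j)) < 1"
    using choice[OF \<open>\<forall>j. \<exists>m::int. j < t \<longrightarrow> absv (c' j - of_int m) < 1\<close>] by blast
  have n: "\<And>j. j < t \<Longrightarrow> absv (c' j - of_int (n j)) < 1" using n0 by blast
  have "c' j0 = 1" unfolding c'_def c0_def using c0nz c0_def by simp
  have nj0: "\<not> int p dvd n j0"
  proof
    assume "int p dvd n j0"
    then have a: "absv (of_int (n j0) :: 'k) < 1" using av_int_lt1_iff by blast
    have b: "absv (1 - of_int (n j0) :: 'k) < 1" using n[OF j0(1)] \<open>c' j0 = 1\<close> by simp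
    have "absv (1 :: 'k) \<le> max (absv (1 - of_int (n j0))) (absv (of_int (n j0)))"
      using av_ultra[of "1 - of_int (n j0)" "of_int (n j0) :: 'k"] by simp
    then show False using a b by simp
  qed
  have S1: "absv (\<Sum>j<t. of_int (n j) * r j) = 1"
  proof -
    have "absv (\<Sum>j<t. of_int (n j) * r j) \<le> 1"
      using ri unfolding RI_def by (intro av_sum_le) (auto intro: mult_le_one av_of_int_le1)
    moreover have "\<not> absv (\<Sum>j<t. of_int (n j) * r j) < 1" using ri nj0 j0(1) unfolding RI_def by blast
    ultimately show ?thesis by simp
  qed
  have tl: "\<And>j. j < t \<Longrightarrow> absv ((c' j - of_int (n j)) * r j) < 1"
  proof -
    fix j assume j: "j < t"
    have "absv (r j) \<le> 1" using ri j unfolding RI_def by blast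
    then have "absv (c' j - of_int (n j)) * absv (r j) \<le> absv (c' j - of_int (n j))"
      by (simp add: mult_left_le)
    then show "absv ((c' j - of_int (n j)) * r j) < 1" using n[OF j] by simp
  qed
  have S2: "absv (\<Sum>j<t. (c' j - of_int (n j)) * r j) < 1"
    using tl by (intro av_sum_less) auto
  have "(\<Sum>j<t. c' j * r j) = (\<Sum>j<t. of_int (n j) * r j) + (\<Sum>j<t. (c' j - of_int (n j)) * r j)"
    by (simp add: sum.distrib[symmetric] algebra_simps)
  then have S3: "absv (\<Sum>j<t. c' j * r j) = 1" using av_add_strict S1 S2 by simp
  have "(\<Sum>j<t. c j * r j) = c0 * (\<Sum>j<t. c' j * r j)"
    unfolding c'_def using c0nz by (simp add: sum_distrib_left)
  then have "absv (\<Sum>j<t. c j * r j) = absv c0" using S3 by simp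
  then show ?thesis using z by auto
qed

end


context padic_ext begin

lemma av_mult_lt1: "absv a < 1 \<Longrightarrow> absv b \<le> 1 \<Longrightarrow> absv (a * b) < 1"
proof -
  assume a: "absv a < 1" and b: "absv b \<le> 1"
  have "absv a * absv b \<le> absv a" using b by (simp add: mult_left_le)
  then show ?thesis using a by simp
qed

lemma av_mult_lt1': "absv a \<le> 1 \<Longrightarrow> absv b < 1 \<Longrightarrow> absv (a * b) < 1"
  using av_mult_lt1[of b a] by (simp add: mult.commute)

lemma av_mult_le1: "absv a \<le> 1 \<Longrightarrow> absv b \<le> 1 \<Longrightarrow> absv (a * b) \<le> 1"
  by (simp add: mult_le_one)

lemma deg_basis: obtains bs :: "'k list" where "length bs = d"
  "\<And>c. (\<forall>i<d. c i \<in> Qp_in absv) \<Longrightarrow> (\<Sum>i<d. c i * bs ! i) = 0 \<Longrightarrow> (\<forall>i<d. c i = 0)"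
  "\<And>x. \<exists>c. (\<forall>i<d. c i \<in> Qp_in absv) \<and> x = (\<Sum>i<d. c i * bs ! i)"
  using deg unfolding ext_degree_def by blast

lemma in_span_basis: "\<exists>bs M. (\<forall>k<m. \<forall>i<d. M k i \<in> Qp_in absv) \<and> (\<forall>k<m. v k = (\<Sum>i<d. M k i * bs ! i))"
proof -
  obtain bs :: "'k list" where b3': "\<forall>x. \<exists>c. (\<forall>i<d. c i \<in> Qp_in absv) \<and> x = (\<Sum>i<d. c i * bs ! i)"
    using deg unfolding ext_degree_def by (elim exE conjE)
  have "\<forall>k. \<exists>c. (\<forall>i<d. c i \<in> Qp_in absv) \<and> v k = (\<Sum>i<d. c i * bs ! i)" using b3' by blast
  then obtain M where M: "\<forall>k. (\<forall>i<d. M k i \<in> Qp_in absv) \<and> v k = (\<Sum>i<d. M k i * bs ! i)"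
    by (rule choice[THEN exE])
  have M1: "\<forall>k<m. \<forall>i<d. M k i \<in> Qp_in absv" using M by blast
  have M2: "\<forall>k<m. v k = (\<Sum>i<d. M k i * bs ! i)" using M by blast
  show ?thesis using M1 M2 by blast
qed

lemma RI_le_d: assumes "RI t r" shows "t \<le> d"
proof (rule ccontr)
  assume "\<not> t \<le> d"
  then have td: "d < t" by simp
  obtain bs M where M1: "\<forall>k<t. \<forall>i<d. M k i \<in> Qp_in absv" and M2: "\<forall>k<t. r k = (\<Sum>i<d. M k i * bs ! i)"
    using in_span_basis[of t r] by (elim exE conjE)
  obtain c where c: "(\<forall>k<t. c k \<in> Qp_in absv) \<and> (\<exists>k<t. c k \<noteq> 0) \<and> (\<Sum>k<t. c k * r k) = 0"
    using dep_aux[OF Qp_subfield td M1 M2] by (elim exE)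
  have c1: "\<forall>k<t. c k \<in> Qp_in absv" and c2: "\<exists>k<t. c k \<noteq> 0" and c3: "(\<Sum>k<t. c k * r k) = 0"
    using c by auto
  obtain z :: int where "absv (\<Sum>k<t. c k * r k) = real p powr z" using IND1[OF assms c1 c2] by (elim exE)
  then have "real p powr z = 0" using c3 by simp
  then show False using p_real_gt1 by simp
qed

lemma RI_0: "RI 0 r" unfolding RI_def lessThan_0 by auto

lemma RI_1: "RI 1 (\<lambda>_. 1)" unfolding RI_def
proof (intro conjI allI impI)
  fix j :: nat assume "j < 1" then show "absv (1::'k) \<le> 1" by simp
next
  fix n :: "nat \<Rightarrow> int" and j :: nat assume a: "absv (\<Sum>j<1. of_int (n j) * (1::'k)) < 1" and j: "j < 1"
  have "(\<Sum>j<1. of_int (n j) * (1::'k)) = of_int (n 0)" by simp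
  then have "absv (of_int (n 0) :: 'k) < 1" using a by simp
  then show "int p dvd n j" using av_int_lt1_iff j by auto
qed

definition fr :: nat where "fr = Max {t. \<exists>r. RI t r}"

lemma fr_props: "RI fr (SOME r. RI fr r)" "\<And>r. \<not> RI (Suc fr) r" "fr \<ge> 1" "fr \<le> d"
proof -
  have fin: "finite {t. \<exists>r. RI t r}"
    by (rule finite_subset[of _ "{..d}"]) (use RI_le_d in auto)
  have ne: "{t. \<exists>r. RI t r} \<noteq> {}" using RI_0 by blast
  have "fr \<in> {t. \<exists>r. RI t r}" unfolding fr_def using Max_in[OF fin ne] .
  then have "\<exists>r. RI fr r" by simp
  then show "RI fr (SOME r. RI fr r)" by (rule someI_ex)
  show "\<And>r. \<not> RI (Suc fr) r"
  proof
    fix r assume "RI (Suc fr) r"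
    then have "Suc fr \<le> fr" unfolding fr_def using Max_ge[OF fin] by blast
    then show False by simp
  qed
  show "fr \<ge> 1" unfolding fr_def using Max_ge[OF fin, of 1] RI_1 by blast
  show "fr \<le> d" using RI_le_d \<open>fr \<in> _\<close> by blast
qed

definition rr :: "nat \<Rightarrow> 'k" where "rr = (SOME r. RI fr r)"

lemma rr_RI: "RI fr rr" unfolding rr_def using fr_props(1) .

lemma rr_le1: "j < fr \<Longrightarrow> absv (rr j) \<le> 1" using rr_RI unfolding RI_def by blast

lemma rr_indep: "absv (\<Sum>j<fr. of_int (n j) * rr j) < 1 \<Longrightarrow> j < fr \<Longrightarrow> int p dvd n j"
  using rr_RI unfolding RI_def by blast

lemma RS: assumes x1: "absv x \<le> 1" shows "\<exists>n::nat \<Rightarrow> int. absv (x - (\<Sum>j<fr. of_int (n j) * rr j)) < 1"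
proof (rule ccontr)
  assume na: "\<not> ?thesis"
  define r' where "r' = rr(fr := x)"
  have "RI (Suc fr) r'" unfolding RI_def
  proof (intro conjI allI impI)
    fix j assume "j < Suc fr" then show "absv (r' j) \<le> 1" unfolding r'_def using rr_le1 x1 by auto
  next
    fix n :: "nat \<Rightarrow> int" and j
    assume S: "absv (\<Sum>j<Suc fr. of_int (n j) * r' j) < 1" and j: "j < Suc fr"
    have Se: "(\<Sum>j<Suc fr. of_int (n j) * r' j) = (\<Sum>j<fr. of_int (n j) * rr j) + of_int (n fr) * x"
      unfolding r'_def by simp
    show "int p dvd n j"
    proof (cases "int p dvd n fr")
      case True
      have a: "absv (of_int (n fr) * x) < 1"
      proof -
        have "absv (of_int (n fr) :: 'k) < 1" using True av_int_lt1_iff by blast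
        then show ?thesis using x1 by (rule av_mult_lt1)
      qed
      have "absv (\<Sum>j<fr. of_int (n j) * rr j) < 1"
        using av_diff[of "(\<Sum>j<fr. of_int (n j) * rr j) + of_int (n fr) * x" "of_int (n fr) * x"] S Se a by simp
      then have "\<forall>j<fr. int p dvd n j" using rr_indep by blast
      then show ?thesis using True j less_Suc_eq by auto
    next
      case False
      obtain u where u: "int p dvd (u * n fr - 1)" using inv_mod[OF False] by blast
      have u1: "absv (of_int u :: 'k) \<le> 1" by (rule av_of_int_le1)
      have a: "absv (of_int u * (\<Sum>j<fr. of_int (n j) * rr j) + of_int (u * n fr) * x) < 1"
      proof -
        have "absv ((\<Sum>j<fr. of_int (n j) * rr j) + of_int (n fr) * x) < 1" using S Se by simp
        then have "absv (of_int u * ((\<Sum>j<fr. of_int (n j) * rr j) + of_int (n fr) * x)) < 1"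
          using u1 by (intro av_mult_lt1')
        then show ?thesis by (simp add: algebra_simps)
      qed
      have b: "absv (of_int (u * n fr - 1) * x) < 1"
      proof -
        have "absv (of_int (u * n fr - 1) :: 'k) < 1" using u av_int_lt1_iff by blast
        then show ?thesis using x1 by (rule av_mult_lt1)
      qed
      have "x + (\<Sum>j<fr. of_int (u * n j) * rr j)
          = (of_int u * (\<Sum>j<fr. of_int (n j) * rr j) + of_int (u * n fr) * x) - of_int (u * n fr - 1) * x"
        by (simp add: algebra_simps sum_distrib_left)
      moreover have "absv ((of_int u * (\<Sum>j<fr. of_int (n j) * rr j) + of_int (u * n fr) * x) - of_int (u * n fr - 1) * x) < 1"
        using av_diff[of "of_int u * (\<Sum>j<fr. of_int (n j) * rr j) + of_int (u * n fr) * x" "of_int (u * n fr - 1) * x"] a b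
        by linarith
      ultimately have "absv (x + (\<Sum>j<fr. of_int (u * n j) * rr j)) < 1" by simp
      moreover have "x + (\<Sum>j<fr. of_int (u * n j) * rr j) = x - (\<Sum>j<fr. of_int (- (u * n j)) * rr j)"
        by (simp add: sum_negf)
      ultimately have "absv (x - (\<Sum>j<fr. of_int (- (u * n j)) * rr j)) < 1" by simp
      then have "\<exists>n'. absv (x - (\<Sum>j<fr. of_int (n' j) * rr j)) < 1" by (intro exI[of _ "\<lambda>j. - (u * n j)"])
      then show ?thesis using na by blast
    qed
  qed
  then show False using fr_props(2) by blast
qed

end


context padic_ext begin

definition pp :: 'k where "pp = (SOME \<pi>. \<pi> \<noteq> 0 \<and> absv \<pi> = real p powr (- 1 / real e))"

lemma pp_props: "pp \<noteq> 0" "absv pp = real p powr (- 1 / real e)"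
proof -
  have "pp \<noteq> 0 \<and> absv pp = real p powr (- 1 / real e)" unfolding pp_def using pi_ex by (rule someI_ex)
  then show "pp \<noteq> 0" "absv pp = real p powr (- 1 / real e)" by auto
qed

lemma av_pp_pow: "absv (pp ^ i) = real p powr (- real i / real e)"
proof -
  have "absv (pp ^ i) = (real p powr (- 1 / real e)) ^ i" by (simp add: av_power pp_props)
  also have "\<dots> = real p powr (real i * (- 1 / real e))" using p_real_gt1 by (subst powr_power) auto
  finally show ?thesis by simp
qed

definition EE :: "(nat \<Rightarrow> nat \<Rightarrow> 'k) \<Rightarrow> 'k" where
  "EE a = (\<Sum>i<e. pp ^ i * (\<Sum>j<fr. a i j * rr j))"

lemma EE_add: "EE (\<lambda>i j. a i j + b i j) = EE a + EE b"
  unfolding EE_def by (simp add: distrib_right sum.distrib distrib_left)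

lemma EE_scale: "EE (\<lambda>i j. c * a i j) = c * EE a"
  unfolding EE_def by (simp add: sum_distrib_left mult.assoc mult.left_commute)

lemma STEP_k: "k \<le> e \<Longrightarrow> absv x \<le> 1 \<Longrightarrow>
   \<exists>a::nat \<Rightarrow> nat \<Rightarrow> int. absv (x - (\<Sum>i<k. pp ^ i * (\<Sum>j<fr. of_int (a i j) * rr j))) \<le> real p powr (- real k / real e)"
proof (induction k)
  case 0 then show ?case using p_real_gt1 by simp
next
  case (Suc k)
  have "\<exists>a::nat \<Rightarrow> nat \<Rightarrow> int. absv (x - (\<Sum>i<k. pp ^ i * (\<Sum>j<fr. of_int (a i j) * rr j))) \<le> real p powr (- real k / real e)"
    using Suc by simp
  then obtain a :: "nat \<Rightarrow> nat \<Rightarrow> int" where a: "absv (x - (\<Sum>i<k. pp ^ i * (\<Sum>j<fr. of_int (a i j) * rr j))) \<le> real p powr (- real k / real e)"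
    by (elim exE)
  define y where "y = x - (\<Sum>i<k. pp ^ i * (\<Sum>j<fr. of_int (a i j) * rr j))"
  have ppk: "pp ^ k \<noteq> 0" using pp_props by simp
  define y' where "y' = y / pp ^ k"
  have y'1: "absv y' \<le> 1"
  proof -
    have pos: "absv (pp ^ k) > 0" using ppk by simp
    have "absv y' = absv y / absv (pp ^ k)" unfolding y'_def by (simp add: av_divide)
    also have "\<dots> \<le> 1" using a pos unfolding y_def av_pp_pow by (simp add: divide_le_eq_1)
    finally show ?thesis .
  qed
  obtain n :: "nat \<Rightarrow> int" where n: "absv (y' - (\<Sum>j<fr. of_int (n j) * rr j)) < 1" using RS[OF y'1] by (elim exE)
  have n2: "absv (y' - (\<Sum>j<fr. of_int (n j) * rr j)) \<le> real p powr (- 1 / real e)"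
  proof (cases "y' - (\<Sum>j<fr. of_int (n j) * rr j) = 0")
    case True then show ?thesis by simp
  next
    case False then show ?thesis using disc n by blast
  qed
  define a' where "a' = a(k := n)"
  have "(\<Sum>i<Suc k. pp ^ i * (\<Sum>j<fr. of_int (a' i j) * rr j))
       = (\<Sum>i<k. pp ^ i * (\<Sum>j<fr. of_int (a i j) * rr j)) + pp ^ k * (\<Sum>j<fr. of_int (n j) * rr j)"
    unfolding a'_def by simp
  moreover have yy: "pp ^ k * y' = y" unfolding y'_def using ppk by simp
  ultimately have "x - (\<Sum>i<Suc k. pp ^ i * (\<Sum>j<fr. of_int (a' i j) * rr j)) = pp ^ k * (y' - (\<Sum>j<fr. of_int (n j) * rr j))"
    unfolding right_diff_distrib yy unfolding y_def by simp
  then have "absv (x - (\<Sum>i<Suc k. pp ^ i * (\<Sum>j<fr. of_int (a' i j) * rr j)))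
      = real p powr (- real k / real e) * absv (y' - (\<Sum>j<fr. of_int (n j) * rr j))"
    by (simp add: av_pp_pow)
  also have "\<dots> \<le> real p powr (- real k / real e) * real p powr (- 1 / real e)"
    using n2 by (intro mult_left_mono) auto
  also have "\<dots> = real p powr (- real (Suc k) / real e)"
  proof -
    have "- real k / real e + - 1 / real e = - real (Suc k) / real e" using e_pos by (simp add: field_simps)
    then show ?thesis by (simp only: powr_add[symmetric])
  qed
  finally show ?case by blast
qed

lemma STEP_e: assumes "absv x \<le> 1" shows "\<exists>a::nat \<Rightarrow> nat \<Rightarrow> int. absv (x - EE (\<lambda>i j. of_int (a i j))) \<le> 1 / real p"
proof -
  obtain a :: "nat \<Rightarrow> nat \<Rightarrow> int" where a: "absv (x - (\<Sum>i<e. pp ^ i * (\<Sum>j<fr. of_int (a i j) * rr j))) \<le> real p powr (- real e / real e)"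
    using STEP_k[OF order_refl assms] by (elim exE)
  have "real p powr (- real e / real e) = 1 / real p" using e_pos p_real_gt1 by (simp add: powr_minus_divide)
  then show ?thesis using a unfolding EE_def by auto
qed

end


context padic_ext begin

definition Phi :: "'k \<Rightarrow> nat \<Rightarrow> nat \<Rightarrow> int" where
  "Phi x = (SOME a. absv (x - EE (\<lambda>i j. of_int (a i j))) \<le> 1 / real p)"

lemma Phi: assumes "absv x \<le> 1" shows "absv (x - EE (\<lambda>i j. of_int (Phi x i j))) \<le> 1 / real p"
  unfolding Phi_def using someI_ex[OF STEP_e[OF assms]] .

primrec Xs :: "'k \<Rightarrow> nat \<Rightarrow> 'k" where
  "Xs x 0 = x"
| "Xs x (Suc N) = (Xs x N - EE (\<lambda>i j. of_int (Phi (Xs x N) i j))) / of_nat p"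

lemma Xs_le1: "absv x \<le> 1 \<Longrightarrow> absv (Xs x N) \<le> 1"
proof (induction N)
  case 0 then show ?case by simp
next
  case (Suc N)
  have a: "absv (Xs x N - EE (\<lambda>i j. of_int (Phi (Xs x N) i j))) \<le> 1 / real p" using Phi Suc by blast
  have "absv (Xs x (Suc N)) = absv (Xs x N - EE (\<lambda>i j. of_int (Phi (Xs x N) i j))) * real p"
    using p_real_gt1 by (simp add: av_divide av_p)
  also have "\<dots> \<le> 1 / real p * real p" using a by (intro mult_right_mono) auto
  also have "\<dots> = 1" using p_real_gt1 by simp
  finally show ?case .
qed

definition Cs :: "'k \<Rightarrow> nat \<Rightarrow> nat \<Rightarrow> nat \<Rightarrow> 'k" where
  "Cs x N i j = (\<Sum>N'<N. of_nat p ^ N' * of_int (Phi (Xs x N') i j))"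

lemma EE_zero: "EE (\<lambda>i j. 0) = 0" unfolding EE_def by simp

lemma Cs_id: "x = EE (Cs x N) + of_nat p ^ N * Xs x N"
proof (induction N)
  case 0 then show ?case unfolding Cs_def by (simp add: EE_zero)
next
  case (Suc N)
  have c: "Cs x (Suc N) = (\<lambda>i j. Cs x N i j + of_nat p ^ N * of_int (Phi (Xs x N) i j))"
    unfolding Cs_def by (intro ext) simp
  have eq1: "EE (Cs x (Suc N)) = EE (Cs x N) + of_nat p ^ N * EE (\<lambda>i j. of_int (Phi (Xs x N) i j))"
    unfolding c EE_add EE_scale ..
  have eq2: "of_nat p * Xs x (Suc N) = Xs x N - EE (\<lambda>i j. of_int (Phi (Xs x N) i j))"
    using p_gt1 by simp
  have "of_nat p ^ Suc N * Xs x (Suc N) = of_nat p ^ N * (of_nat p * Xs x (Suc N))"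
    by (simp del: Xs.simps add: ac_simps)
  also have "\<dots> = of_nat p ^ N * (Xs x N - EE (\<lambda>i j. of_int (Phi (Xs x N) i j)))" using eq2 by (simp del: Xs.simps)
  finally have "of_nat p ^ Suc N * Xs x (Suc N) = of_nat p ^ N * (Xs x N - EE (\<lambda>i j. of_int (Phi (Xs x N) i j)))" .
  then have "EE (Cs x (Suc N)) + of_nat p ^ Suc N * Xs x (Suc N) = EE (Cs x N) + of_nat p ^ N * Xs x N"
    unfolding eq1 by (simp del: Xs.simps add: algebra_simps)
  then show ?case using Suc by simp
qed

lemma av_pN: "absv (of_nat p ^ N :: 'k) = (1 / real p) ^ N" by (simp add: av_power av_p)

lemma Cs_conv: "\<exists>L. conv (\<lambda>N. Cs x N i j) L"
proof (rule geom_conv[where C=1 and \<rho>="1 / real p"])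
  fix N
  have "Cs x (Suc N) i j - Cs x N i j = of_nat p ^ N * of_int (Phi (Xs x N) i j)" unfolding Cs_def by simp
  then have "absv (Cs x (Suc N) i j - Cs x N i j) = (1 / real p) ^ N * absv (of_int (Phi (Xs x N) i j) :: 'k)"
    by (simp add: av_pN)
  also have "\<dots> \<le> (1 / real p) ^ N * 1" using av_of_int_le1 by (intro mult_left_mono) auto
  finally show "absv (Cs x (Suc N) i j - Cs x N i j) \<le> 1 * (1 / real p) ^ N" by simp
qed (use p_real_gt1 in auto)

lemma Qp_sum: "finite S \<Longrightarrow> (\<And>i. i \<in> S \<Longrightarrow> f i \<in> Qp_in absv) \<Longrightarrow> sum f S \<in> Qp_in absv"
  using subfield_sum[OF Qp_subfield] by blast

lemma Cs_Qp: "Cs x N i j \<in> Qp_in absv"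
  unfolding Cs_def by (intro Qp_sum Qp_mult) (auto simp: Qp_int of_nat_power[symmetric] Qp_nat simp del: of_nat_power)

lemma conv_EE: assumes "\<And>i j. conv (\<lambda>N. A N i j) (L i j)" shows "conv (\<lambda>N. EE (A N)) (EE L)"
  unfolding EE_def
  by (intro conv_sum conv_mult conv_const assms) auto

lemma conv_geom0: assumes "\<And>N. absv (Y N) \<le> (1 / real p) ^ N" shows "conv Y 0"
  unfolding conv_zero
proof (intro allI impI)
  fix \<epsilon> :: real assume e: "\<epsilon> > 0"
  obtain N0 where N0: "(1 / real p) ^ N0 < \<epsilon>" using real_arch_pow_inv[OF e, of "1 / real p"] p_real_gt1 by auto
  have "\<forall>N\<ge>N0. absv (Y N) < \<epsilon>"
  proof (intro allI impI)
    fix N assume "N \<ge> N0"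
    then have "(1 / real p) ^ N \<le> (1 / real p) ^ N0" using p_real_gt1 by (intro power_decreasing) auto
    then show "absv (Y N) < \<epsilon>" using assms[of N] N0 by linarith
  qed
  then show "\<exists>N. \<forall>n\<ge>N. absv (Y n) < \<epsilon>" by blast
qed

lemma SPAN1: assumes "absv x \<le> 1" shows "\<exists>c. (\<forall>i j. c i j \<in> Qp_in absv) \<and> x = EE c"
proof -
  have "\<forall>i. \<exists>f. \<forall>j. conv (\<lambda>N. Cs x N i j) (f j)" using Cs_conv by (intro allI choice) blast
  then obtain L where L: "\<forall>i j. conv (\<lambda>N. Cs x N i j) (L i j)" by (rule choice[THEN exE]) blast
  have LQ: "\<forall>i j. L i j \<in> Qp_in absv"
  proof (intro allI)
    fix i j
    show "L i j \<in> Qp_in absv" using Qp_closed[of "\<lambda>N. Cs x N i j" "L i j"] L Cs_Qp by blast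
  qed
  have c1: "conv (\<lambda>N. EE (Cs x N)) (EE L)" using L by (intro conv_EE) blast
  have "conv (\<lambda>N. of_nat p ^ N * Xs x N) 0"
  proof (rule conv_geom0)
    fix N
    have "absv (of_nat p ^ N * Xs x N) = (1 / real p) ^ N * absv (Xs x N)" by (simp add: av_pN)
    also have "\<dots> \<le> (1 / real p) ^ N * 1" using Xs_le1[OF assms] by (intro mult_left_mono) auto
    finally show "absv (of_nat p ^ N * Xs x N) \<le> (1 / real p) ^ N" by simp
  qed
  then have "conv (\<lambda>N. x - of_nat p ^ N * Xs x N) (x - 0)" by (intro conv_diff conv_const)
  moreover have "(\<lambda>N. x - of_nat p ^ N * Xs x N) = (\<lambda>N. EE (Cs x N))"
    using Cs_id[of x] by (intro ext) (metis add_diff_cancel_right')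
  ultimately have "conv (\<lambda>N. EE (Cs x N)) x" by simp
  then have "x = EE L" using conv_unique c1 by blast
  then show ?thesis using LQ by blast
qed

lemma SPAN: "\<exists>c. (\<forall>i j. c i j \<in> Qp_in absv) \<and> x = EE c"
proof -
  obtain M where M: "absv x < real p ^ M" using real_arch_pow[OF p_real_gt1] by blast
  define y where "y = x * of_nat p ^ M"
  have "absv y = absv x * (1 / real p) ^ M" unfolding y_def by (simp add: av_pN)
  also have "\<dots> = absv x / real p ^ M" by (simp add: power_one_over)
  also have "\<dots> \<le> 1" using M p_real_gt1 by simp
  finally obtain c where c: "\<forall>i j. c i j \<in> Qp_in absv" "y = EE c" using SPAN1 by blast
  have pM: "(of_nat p ^ M :: 'k) \<noteq> 0" using p_gt1 by simp
  have "x = inverse (of_nat p ^ M) * y" unfolding y_def using pM by simp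
  also have "\<dots> = EE (\<lambda>i j. inverse (of_nat p ^ M) * c i j)" unfolding c(2) EE_scale ..
  finally have "x = EE (\<lambda>i j. inverse (of_nat p ^ M) * c i j)" .
  moreover have "\<forall>i j. inverse (of_nat p ^ M) * c i j \<in> Qp_in absv"
    using c(1) Qp_mult Qp_inverse Qp_nat[of "p ^ M"] by simp
  ultimately show ?thesis by (intro exI[of _ "\<lambda>i j. inverse (of_nat p ^ M) * c i j"] conjI)
qed

end


lemma sum_divmod: assumes "(f::nat) > 0"
  shows "(\<Sum>k<m * f. h (k div f) (k mod f)) = (\<Sum>i<m. \<Sum>j<f. h i j :: 'a::comm_monoid_add)"
proof (induction m)
  case 0 then show ?case by simp
next
  case (Suc m)
  have "{..<Suc m * f} = {..<m * f} \<union> {m * f..<m * f + f}" by auto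
  then have "(\<Sum>k<Suc m * f. h (k div f) (k mod f)) = (\<Sum>k<m * f. h (k div f) (k mod f)) + (\<Sum>k\<in>{m * f..<m * f + f}. h (k div f) (k mod f))"
    by (simp add: sum.union_disjoint ivl_disj_int(15) lessThan_atLeast0)
  also have "(\<Sum>k\<in>{m * f..<m * f + f}. h (k div f) (k mod f)) = (\<Sum>j<f. h ((m * f + j) div f) ((m * f + j) mod f))"
  proof -
    have "(\<Sum>k\<in>{0 + m * f..<f + m * f}. h (k div f) (k mod f)) = (\<Sum>j\<in>{0..<f}. h ((j + m * f) div f) ((j + m * f) mod f))"
      by (rule sum.shift_bounds_nat_ivl)
    then show ?thesis by (simp add: add.commute atLeast0LessThan)
  qed
  also have "\<dots> = (\<Sum>j<f. h m j)" using assms by (intro sum.cong) auto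
  finally show ?case using Suc by simp
qed

context padic_ext begin

definition ww :: "nat \<Rightarrow> 'k" where "ww k = pp ^ (k div fr) * rr (k mod fr)"

lemma fr_pos: "fr > 0" using fr_props(3) by simp

lemma EE_ww: "EE c = (\<Sum>k<e * fr. c (k div fr) (k mod fr) * ww k)"
proof -
  have "(\<Sum>k<e * fr. c (k div fr) (k mod fr) * ww k) = (\<Sum>i<e. \<Sum>j<fr. c i j * (pp ^ i * rr j))"
    unfolding ww_def using sum_divmod[OF fr_pos, where m=e and h="\<lambda>i j. c i j * (pp ^ i * rr j)"] by simp
  also have "\<dots> = EE c" unfolding EE_def by (simp add: sum_distrib_left ac_simps)
  finally show ?thesis by simp
qed

lemma powr_distinct:
  assumes "i < e" "i' < e" "real p powr (real_of_int z - real i / real e) = real p powr (real_of_int z' - real i' / real e)"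
  shows "i = i'"
proof -
  have "real_of_int z - real i / real e = real_of_int z' - real i' / real e"
    using assms(3) powr_inj[of "real p"] p_real_gt1 by simp
  then have "real e * real_of_int z - real i = real e * real_of_int z' - real i'" using e_pos by (simp add: field_simps)
  then have "real_of_int (int e * z - int i) = real_of_int (int e * z' - int i')" by simp
  then have h: "int e * z - int i = int e * z' - int i'" by (simp only: of_int_eq_iff)
  then have hz: "int e * (z - z') = int i - int i'" by (simp add: algebra_simps)
  have lt: "\<bar>int i - int i'\<bar> < int e" using assms(1,2) by simp
  have "z = z'"
  proof (rule ccontr)
    assume "z \<noteq> z'"
    then have "\<bar>z - z'\<bar> \<ge> 1" by simp
    then have "int e * 1 \<le> int e * \<bar>z - z'\<bar>" by (intro mult_left_mono) auto
    also have "\<dots> = \<bar>int e * (z - z')\<bar>" by (simp add: abs_mult)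
    finally show False using hz lt by simp
  qed
  then show ?thesis using h by simp
qed

lemma IND_full: assumes cQ: "\<forall>k<e * fr. cc k \<in> Qp_in absv" and s0: "(\<Sum>k<e * fr. cc k * ww k) = 0"
  shows "\<forall>k<e * fr. cc k = 0"
proof (rule ccontr)
  assume "\<not> (\<forall>k<e * fr. cc k = 0)"
  then obtain k0 where k0: "k0 < e * fr" "cc k0 \<noteq> 0" by blast
  define c where "c i j = cc (i * fr + j)" for i j
  have ij: "\<And>i j. i < e \<Longrightarrow> j < fr \<Longrightarrow> i * fr + j < e * fr"
  proof -
    fix i j assume "i < e" "j < fr"
    then have "i * fr + j < i * fr + fr" by simp
    also have "\<dots> = Suc i * fr" by simp
    also have "\<dots> \<le> e * fr" using \<open>i < e\<close> by (intro mult_right_mono) auto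
    finally show "i * fr + j < e * fr" .
  qed
  have cc_c: "\<And>k. cc k = c (k div fr) (k mod fr)" unfolding c_def div_mult_mod_eq ..
  define S where "S i = (\<Sum>j<fr. c i j * rr j)" for i
  define Z where "Z i = pp ^ i * S i" for i
  have sumZ: "(\<Sum>i<e. Z i) = 0"
  proof -
    have "(\<Sum>i<e. Z i) = EE c" unfolding Z_def S_def EE_def ..
    also have "\<dots> = (\<Sum>k<e * fr. cc k * ww k)" unfolding EE_ww cc_c ..
    finally show ?thesis using s0 by simp
  qed
  define J where "J = {i. i < e \<and> (\<exists>j<fr. c i j \<noteq> 0)}"
  have Jz: "\<And>i. i \<in> J \<Longrightarrow> \<exists>z::int. absv (Z i) = real p powr (real_of_int z - real i / real e)"
  proof -
    fix i assume "i \<in> J"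
    then have i: "i < e" "\<exists>j<fr. c i j \<noteq> 0" unfolding J_def by auto
    have cQi: "\<forall>j<fr. c i j \<in> Qp_in absv" unfolding c_def using cQ ij i(1) by blast
    obtain z :: int where z: "absv (S i) = real p powr z" unfolding S_def using IND1[OF rr_RI cQi i(2)] by (elim exE)
    have "absv (Z i) = real p powr (- real i / real e) * real p powr z" unfolding Z_def by (simp add: av_pp_pow z)
    also have "\<dots> = real p powr (real_of_int z - real i / real e)" by (simp add: powr_add[symmetric])
    finally show "\<exists>z::int. absv (Z i) = real p powr (real_of_int z - real i / real e)" by blast
  qed
  have nJ: "\<And>i. i < e \<Longrightarrow> i \<notin> J \<Longrightarrow> Z i = 0" unfolding J_def Z_def S_def by auto
  have i0J: "k0 div fr \<in> J"
  proof -
    have "k0 div fr < e" using k0(1) fr_pos by (simp add: less_mult_imp_div_less)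
    moreover have "k0 mod fr < fr" using fr_pos by simp
    moreover have "c (k0 div fr) (k0 mod fr) \<noteq> 0" using k0(2) cc_c by simp
    ultimately show ?thesis unfolding J_def by blast
  qed
  have Jfin: "finite J" "J \<noteq> {}" using i0J unfolding J_def by (auto intro: finite_subset[of _ "{..<e}"])
  define A where "A = (\<lambda>i. absv (Z i)) ` J"
  have Afin: "finite A" "A \<noteq> {}" unfolding A_def using Jfin by auto
  obtain i1 where i1: "i1 \<in> J" "absv (Z i1) = Max A" using Max_in[OF Afin] unfolding A_def by auto
  have imax: "\<And>i. i \<in> J \<Longrightarrow> absv (Z i) \<le> absv (Z i1)" using Max_ge[OF Afin(1)] i1(2) unfolding A_def by auto
  obtain z1 :: int where z1: "absv (Z i1) = real p powr (real_of_int z1 - real i1 / real e)" using Jz[OF i1(1)] by (elim exE)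
  have Zpos: "absv (Z i1) > 0" using z1 p_real_gt1 by simp
  have i1e: "i1 < e" using i1(1) unfolding J_def by simp
  have less: "\<And>i. i \<in> {..<e} - {i1} \<Longrightarrow> absv (Z i) < absv (Z i1)"
  proof -
    fix i assume i: "i \<in> {..<e} - {i1}"
    show "absv (Z i) < absv (Z i1)"
    proof (cases "i \<in> J")
      case False then show ?thesis using nJ i Zpos by simp
    next
      case True
      obtain z :: int where z: "absv (Z i) = real p powr (real_of_int z - real i / real e)" using Jz[OF True] by (elim exE)
      have "absv (Z i) \<noteq> absv (Z i1)"
      proof
        assume "absv (Z i) = absv (Z i1)"
        then have "i = i1" using powr_distinct[of i i1 z z1] z z1 i i1e by simp
        then show False using i by simp
      qed
      then show ?thesis using imax[OF True] by simp
    qed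
  qed
  have "(\<Sum>i<e. Z i) = Z i1 + (\<Sum>i\<in>{..<e} - {i1}. Z i)"
    using i1e by (simp add: sum.remove)
  moreover have "absv (\<Sum>i\<in>{..<e} - {i1}. Z i) < absv (Z i1)" using less Zpos by (intro av_sum_less) auto
  ultimately have "absv (\<Sum>i<e. Z i) = absv (Z i1)" using av_add_strict by simp
  then show False using sumZ Zpos by simp
qed

end


context padic_ext begin

lemma ww_span: "\<exists>c. (\<forall>k. c k \<in> Qp_in absv) \<and> x = (\<Sum>k<e * fr. c k * ww k)"
proof -
  obtain c where c: "\<forall>i j. c i j \<in> Qp_in absv" "x = EE c" using SPAN[of x] by (elim exE conjE)
  show ?thesis using c unfolding EE_ww by (intro exI[of _ "\<lambda>k. c (k div fr) (k mod fr)"] conjI) auto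
qed

lemma d_le: "d \<le> e * fr"
proof (rule ccontr)
  assume "\<not> d \<le> e * fr"
  then have lt: "e * fr < d" by simp
  obtain bs :: "'k list" where b2': "\<forall>c. (\<forall>i<d. c i \<in> Qp_in absv) \<longrightarrow> (\<Sum>i<d. c i * bs ! i) = 0 \<longrightarrow> (\<forall>i<d. c i = 0)"
    using deg unfolding ext_degree_def by (elim exE conjE)
  have "\<forall>k. \<exists>c. (\<forall>k'. c k' \<in> Qp_in absv) \<and> bs ! k = (\<Sum>k'<e * fr. c k' * ww k')" using ww_span by blast
  then obtain M where M: "\<forall>k. (\<forall>k'. M k k' \<in> Qp_in absv) \<and> bs ! k = (\<Sum>k'<e * fr. M k k' * ww k')"
    by (rule choice[THEN exE])
  have M1: "\<forall>k<d. \<forall>i<e * fr. M k i \<in> Qp_in absv" using M by blast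
  have M2: "\<forall>k<d. bs ! k = (\<Sum>i<e * fr. M k i * ww i)" using M by blast
  obtain c where c: "(\<forall>k<d. c k \<in> Qp_in absv) \<and> (\<exists>k<d. c k \<noteq> 0) \<and> (\<Sum>k<d. c k * bs ! k) = 0"
    using dep_aux[OF Qp_subfield lt M1 M2] by (elim exE)
  then show False using b2' by blast
qed

lemma d_ge: "e * fr \<le> d"
proof (rule ccontr)
  assume "\<not> e * fr \<le> d"
  then have lt: "d < e * fr" by simp
  obtain bs M where M1: "\<forall>k<e * fr. \<forall>i<d. M k i \<in> Qp_in absv" and M2: "\<forall>k<e * fr. ww k = (\<Sum>i<d. M k i * bs ! i)"
    using in_span_basis[of "e * fr" ww] by (elim exE conjE)
  obtain c where c: "(\<forall>k<e * fr. c k \<in> Qp_in absv) \<and> (\<exists>k<e * fr. c k \<noteq> 0) \<and> (\<Sum>k<e * fr. c k * ww k) = 0"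
    using dep_aux[OF Qp_subfield lt M1 M2] by (elim exE)
  then show False using IND_full[of c] by blast
qed

lemma d_eq: "d = e * fr" using d_le d_ge by simp

lemma fr_eq: "d div e = fr" using d_eq e_pos by simp

end


context padic_ext begin

definition TT :: "nat list set" where "TT = {xs. set xs \<subseteq> {0..<p} \<and> length xs = fr}"
definition rho :: "nat list \<Rightarrow> 'k" where "rho xs = (\<Sum>j<fr. of_nat (xs ! j) * rr j)"
definition z0 :: "nat list" where "z0 = replicate fr 0"

lemma TT_fin: "finite TT" unfolding TT_def by (rule finite_lists_length_eq) simp
lemma TT_card: "card TT = p ^ fr" unfolding TT_def using card_lists_length_eq[of "{0..<p}" fr] by simp
lemma z0_TT: "z0 \<in> TT" unfolding TT_def z0_def using p_gt1 by auto
lemma rho_z0: "rho z0 = 0" unfolding rho_def z0_def by simp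
lemma TT_nth: assumes "xs \<in> TT" "j < fr" shows "xs ! j < p"
proof -
  have "xs ! j \<in> set xs" using assms unfolding TT_def by simp
  then show ?thesis using assms(1) unfolding TT_def by auto
qed

lemma rho_le1: "absv (rho xs) \<le> 1"
  unfolding rho_def
proof (rule av_sum_le)
  fix j assume "j \<in> {..<fr}"
  then show "absv (of_nat (xs ! j) * rr j) \<le> 1" using av_mult_le1[OF av_of_nat_le1 rr_le1] by simp
qed auto

lemma rep_ex: assumes "absv x \<le> 1" shows "\<exists>xs\<in>TT. absv (x - rho xs) < 1"
proof -
  obtain n :: "nat \<Rightarrow> int" where n: "absv (x - (\<Sum>j<fr. of_int (n j) * rr j)) < 1" using RS[OF assms] by (elim exE)
  define xs where "xs = map (\<lambda>j. nat (n j mod int p)) [0..<fr]"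
  have "\<And>j. nat (n j mod int p) < p" using p_gt1 by (simp add: nat_less_iff)
  then have xsT: "xs \<in> TT" unfolding TT_def xs_def by auto
  have "rho xs - (\<Sum>j<fr. of_int (n j) * rr j) = (\<Sum>j<fr. of_int (n j mod int p - n j) * rr j)"
    unfolding rho_def xs_def using p_gt1 by (simp add: sum_subtractf[symmetric] algebra_simps)
  also have "absv \<dots> < 1"
  proof (rule av_sum_less)
    fix j
    have "int p dvd (n j mod int p - n j)" by (simp add: mod_eq_dvd_iff[symmetric])
    then have "absv (of_int (n j mod int p - n j) :: 'k) < 1" using av_int_lt1_iff by blast
    moreover assume "j \<in> {..<fr}"
    ultimately show "absv (of_int (n j mod int p - n j) * rr j) < 1" using rr_le1 by (intro av_mult_lt1) auto
  qed auto
  finally have "absv (rho xs - (\<Sum>j<fr. of_int (n j) * rr j)) < 1" .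
  then have "absv (x - rho xs) < 1"
    using av_trans[of x "rho xs" "\<Sum>j<fr. of_int (n j) * rr j"] n av_diff_comm[of "rho xs" "\<Sum>j<fr. of_int (n j) * rr j"] by simp
  then show ?thesis using xsT by blast
qed

lemma rep_uniq: assumes "xs \<in> TT" "ys \<in> TT" "absv (rho xs - rho ys) < 1" shows "xs = ys"
proof -
  have eqr: "rho xs - rho ys = (\<Sum>j<fr. of_int (int (xs ! j) - int (ys ! j)) * rr j)"
    unfolding rho_def by (simp add: sum_subtractf[symmetric] algebra_simps)
  have s: "absv (\<Sum>j<fr. of_int (int (xs ! j) - int (ys ! j)) * rr j) < 1" using assms(3) unfolding eqr .
  have "\<forall>j<fr. int p dvd (int (xs ! j) - int (ys ! j))" using rr_indep[OF s] by blast
  then have eq: "\<forall>j<fr. xs ! j = ys ! j"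
  proof (intro allI impI)
    fix j assume a: "\<forall>j<fr. int p dvd (int (xs ! j) - int (ys ! j))" and j: "j < fr"
    have lt: "xs ! j < p" "ys ! j < p" using TT_nth assms(1,2) j by auto
    have "int (xs ! j) mod int p = int (ys ! j) mod int p" using a j by (simp add: mod_eq_dvd_iff)
    then show "xs ! j = ys ! j" using lt by simp
  qed
  have "length xs = fr" "length ys = fr" using assms(1,2) unfolding TT_def by auto
  then show ?thesis using eq by (intro nth_equalityI) auto
qed

lemma rho_unit: assumes "xs \<in> TT" "xs \<noteq> z0" shows "absv (rho xs) = 1"
proof (rule ccontr)
  assume "absv (rho xs) \<noteq> 1"
  then have "absv (rho xs - rho z0) < 1" using rho_le1[of xs] by (simp add: rho_z0)
  then show False using rep_uniq[OF assms(1) z0_TT] assms(2) by blast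
qed

lemma congprod: "finite S \<Longrightarrow> (\<And>i. i \<in> S \<Longrightarrow> absv (a i) \<le> 1 \<and> absv (b i) \<le> 1 \<and> absv (a i - b i) < 1)
   \<Longrightarrow> absv ((\<Prod>i\<in>S. a i) - (\<Prod>i\<in>S. b i)) < 1"
proof (induction S rule: finite_induct)
  case empty then show ?case by simp
next
  case (insert x F)
  have hx: "absv (a x) \<le> 1" "absv (b x) \<le> 1" "absv (a x - b x) < 1" using insert.prems by auto
  have IH: "absv ((\<Prod>i\<in>F. a i) - (\<Prod>i\<in>F. b i)) < 1" using insert by auto
  have bF: "absv (\<Prod>i\<in>F. b i) \<le> 1"
  proof -
    have "absv (\<Prod>i\<in>F. b i) = (\<Prod>i\<in>F. absv (b i))" using insert.hyps(1) by (induction F rule: finite_induct) auto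
    also have "\<dots> \<le> 1" using insert.prems by (intro prod_le_1) auto
    finally show ?thesis .
  qed
  have "(\<Prod>i\<in>insert x F. a i) - (\<Prod>i\<in>insert x F. b i)
      = a x * ((\<Prod>i\<in>F. a i) - (\<Prod>i\<in>F. b i)) + (a x - b x) * (\<Prod>i\<in>F. b i)"
    using insert.hyps by (simp add: algebra_simps)
  moreover have "absv (a x * ((\<Prod>i\<in>F. a i) - (\<Prod>i\<in>F. b i))) < 1" using hx IH by (intro av_mult_lt1')
  moreover have "absv ((a x - b x) * (\<Prod>i\<in>F. b i)) < 1" using hx bF by (intro av_mult_lt1)
  ultimately show ?case using av_ultra[of "a x * ((\<Prod>i\<in>F. a i) - (\<Prod>i\<in>F. b i))" "(a x - b x) * (\<Prod>i\<in>F. b i)"]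
    by simp
qed

lemma av_prod: "finite S \<Longrightarrow> absv (\<Prod>i\<in>S. f i) = (\<Prod>i\<in>S. absv (f i))"
  by (induction S rule: finite_induct) auto

lemma fermat_unit: assumes u1: "absv u = 1" shows "absv (u ^ (p ^ fr - 1) - 1) < 1"
proof -
  define T' where "T' = TT - {z0}"
  have T'fin: "finite T'" unfolding T'_def using TT_fin by simp
  have T'card: "card T' = p ^ fr - 1" unfolding T'_def using TT_card z0_TT TT_fin by (simp add: card_Diff_singleton)
  define \<sigma> where "\<sigma> xs = (SOME ys. ys \<in> TT \<and> absv (u * rho xs - rho ys) < 1)" for xs
  have \<sigma>: "\<And>xs. \<sigma> xs \<in> TT \<and> absv (u * rho xs - rho (\<sigma> xs)) < 1"
  proof -
    fix xs
    have "absv (u * rho xs) \<le> 1" using u1 rho_le1 by simp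
    then have "\<exists>ys. ys \<in> TT \<and> absv (u * rho xs - rho ys) < 1" using rep_ex by blast
    then show "\<sigma> xs \<in> TT \<and> absv (u * rho xs - rho (\<sigma> xs)) < 1" unfolding \<sigma>_def by (rule someI_ex)
  qed
  have \<sigma>T': "\<sigma> ` T' \<subseteq> T'"
  proof
    fix y assume "y \<in> \<sigma> ` T'"
    then obtain xs where xs: "xs \<in> T'" "y = \<sigma> xs" by blast
    have "absv (u * rho xs) = 1" using rho_unit xs(1) u1 unfolding T'_def by simp
    moreover have "absv (u * rho xs - rho (\<sigma> xs)) < 1" using \<sigma> by blast
    ultimately have "\<sigma> xs \<noteq> z0" using rho_z0 by auto
    then show "y \<in> T'" using \<sigma>[of xs] xs unfolding T'_def by auto
  qed
  have inj: "inj_on \<sigma> T'"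
  proof
    fix xs ys assume xs: "xs \<in> T'" and ys: "ys \<in> T'" and eq: "\<sigma> xs = \<sigma> ys"
    have a1: "absv (u * rho xs - rho (\<sigma> xs)) < 1" using \<sigma>[of xs] by blast
    have a2: "absv (rho (\<sigma> xs) - u * rho ys) < 1" using \<sigma>[of ys] eq av_diff_comm[of "u * rho ys" "rho (\<sigma> ys)"] by simp
    have "absv (u * rho xs - u * rho ys) < 1"
      using av_trans[of "u * rho xs" "u * rho ys" "rho (\<sigma> xs)"] a1 a2 by (meson le_less_trans max_less_iff_conj)
    then have "absv (rho xs - rho ys) < 1" using u1 by (simp add: right_diff_distrib[symmetric])
    then show "xs = ys" using rep_uniq xs ys unfolding T'_def by blast
  qed
  have img: "\<sigma> ` T' = T'" using endo_inj_surj[OF T'fin \<sigma>T' inj] .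
  define P where "P = (\<Prod>xs\<in>T'. rho xs)"
  have P1: "absv P = 1" unfolding P_def using av_prod[OF T'fin] rho_unit unfolding T'_def by simp
  have "(\<Prod>xs\<in>T'. rho (\<sigma> xs)) = P"
    unfolding P_def using prod.reindex[OF inj, of rho] img by simp
  moreover have "absv ((\<Prod>xs\<in>T'. u * rho xs) - (\<Prod>xs\<in>T'. rho (\<sigma> xs))) < 1"
    using T'fin
  proof (rule congprod)
    fix xs assume "xs \<in> T'"
    show "absv (u * rho xs) \<le> 1 \<and> absv (rho (\<sigma> xs)) \<le> 1 \<and> absv (u * rho xs - rho (\<sigma> xs)) < 1"
      using u1 rho_le1 \<sigma> by simp
  qed
  moreover have "(\<Prod>xs\<in>T'. u * rho xs) = u ^ card T' * P" unfolding P_def by (simp add: prod.distrib)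
  ultimately have "absv (u ^ card T' * P - P) < 1" by simp
  then have "absv ((u ^ card T' - 1) * P) < 1" by (simp add: algebra_simps)
  then show ?thesis using P1 T'card by simp
qed

lemma FERMAT: assumes "absv u \<le> 1" shows "absv (u ^ (p ^ fr) - u) < 1"
proof (cases "absv u = 1")
  case True
  have q: "p ^ fr = Suc (p ^ fr - 1)" using p_gt1 by simp
  have "u ^ (p ^ fr) - u = u * (u ^ (p ^ fr - 1) - 1)" by (subst q) (simp add: algebra_simps)
  then show ?thesis using fermat_unit[OF True] True by simp
next
  case False
  then have u: "absv u < 1" using assms by simp
  have q: "p ^ fr > 0" using p_gt1 by simp
  have "absv (u ^ (p ^ fr)) < 1" using u q by (simp add: av_power power_less_one_iff)
  then show ?thesis using av_diff[of "u ^ (p ^ fr)" u] u by simp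
qed

end


context padic_ext begin

lemma pow_diff: "absv x \<le> 1 \<Longrightarrow> absv y \<le> 1 \<Longrightarrow> absv (x ^ n - y ^ n) \<le> absv (x - y)"
proof (induction n)
  case 0 then show ?case by simp
next
  case (Suc n)
  have e: "x ^ Suc n - y ^ Suc n = x * (x ^ n - y ^ n) + (x - y) * y ^ n" by (simp add: algebra_simps)
  have a: "absv (x * (x ^ n - y ^ n)) \<le> absv (x - y)"
  proof -
    have "absv (x * (x ^ n - y ^ n)) = absv x * absv (x ^ n - y ^ n)" by simp
    also have "\<dots> \<le> 1 * absv (x - y)" using Suc by (intro mult_mono) auto
    finally show ?thesis by simp
  qed
  have b: "absv ((x - y) * y ^ n) \<le> absv (x - y)"
  proof -
    have "absv (y ^ n) \<le> 1" using Suc.prems by (simp add: av_power power_le_one)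
    then show ?thesis by (simp add: mult_left_le)
  qed
  show ?case unfolding e using av_ultra[of "x * (x ^ n - y ^ n)" "(x - y) * y ^ n"] a b by simp
qed

lemma pow_p_contract:
  assumes x: "absv x \<le> 1" and y: "absv y \<le> 1" and r: "absv (x - y) \<le> r"
  shows "absv (x ^ p - y ^ p) \<le> r * max (1 / real p) r"
proof -
  define S where "S = (\<Sum>i<p. y ^ (p - Suc i) * x ^ i)"
  have eq: "x ^ p - y ^ p = (x - y) * S" unfolding S_def by (rule power_diff_sumr2)
  have "S - of_nat p * y ^ (p - 1) = (\<Sum>i<p. y ^ (p - Suc i) * (x ^ i - y ^ i))"
  proof -
    have "\<And>i. i < p \<Longrightarrow> y ^ (p - Suc i) * y ^ i = y ^ (p - 1)"
      by (simp add: power_add[symmetric])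
    then have "(\<Sum>i<p. y ^ (p - Suc i) * y ^ i) = of_nat p * y ^ (p - 1)" by simp
    then show ?thesis unfolding S_def by (simp add: right_diff_distrib sum_subtractf)
  qed
  moreover have "absv (\<Sum>i<p. y ^ (p - Suc i) * (x ^ i - y ^ i)) \<le> absv (x - y)"
  proof (rule av_sum_le)
    fix i
    have "absv (y ^ (p - Suc i)) \<le> 1" using y by (simp add: av_power power_le_one)
    then have "absv (y ^ (p - Suc i) * (x ^ i - y ^ i)) \<le> absv (x ^ i - y ^ i)" by (simp add: mult_left_le_one_le)
    also have "\<dots> \<le> absv (x - y)" using pow_diff x y .
    finally show "absv (y ^ (p - Suc i) * (x ^ i - y ^ i)) \<le> absv (x - y)" .
  qed auto
  ultimately have a: "absv (S - of_nat p * y ^ (p - 1)) \<le> r" using r by simp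
  have b: "absv (of_nat p * y ^ (p - 1)) \<le> 1 / real p"
  proof -
    have "absv (y ^ (p - 1)) \<le> 1" using y by (simp add: av_power power_le_one)
    then show ?thesis using p_real_gt1 by (simp add: av_p divide_right_mono)
  qed
  have "absv S \<le> max (1 / real p) r"
    using av_ultra[of "S - of_nat p * y ^ (p - 1)" "of_nat p * y ^ (p - 1)"] a b by simp
  moreover have "0 \<le> r" using r av_nonneg[of "x - y"] by linarith
  ultimately have "absv (x - y) * absv S \<le> r * max (1 / real p) r" using r by (intro mult_mono) auto
  then show ?thesis unfolding eq by simp
qed

lemma pow_pk_contract:
  assumes x: "absv x \<le> 1" and y: "absv y \<le> 1" and r: "absv (x - y) \<le> r" and r0: "r \<le> r0" "r0 < 1"
  shows "absv (x ^ (p ^ k) - y ^ (p ^ k)) \<le> (max (1 / real p) r0) ^ k * r"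
proof (induction k)
  case 0 then show ?case using r by simp
next
  case (Suc k)
  define \<rho> where "\<rho> = max (1 / real p) r0"
  have \<rho>: "0 \<le> \<rho>" "\<rho> < 1" unfolding \<rho>_def using r0 p_real_gt1 by (auto simp: le_max_iff_disj)
  have r0p: "0 \<le> r" using r av_nonneg order_trans by blast
  define r' where "r' = \<rho> ^ k * r"
  have r'r0: "r' \<le> r0"
  proof -
    have "\<rho> ^ k \<le> 1" using \<rho> by (simp add: power_le_one)
    then have "r' \<le> r" unfolding r'_def using r0p by (simp add: mult_left_le_one_le mult.commute[of _ r] mult_left_le)
    then show ?thesis using r0 by simp
  qed
  have xk: "absv (x ^ (p ^ k)) \<le> 1" "absv (y ^ (p ^ k)) \<le> 1" using x y by (simp_all add: av_power power_le_one)
  have "absv ((x ^ (p ^ k)) ^ p - (y ^ (p ^ k)) ^ p) \<le> r' * max (1 / real p) r'"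
    using pow_p_contract[OF xk] Suc.IH unfolding r'_def \<rho>_def by blast
  also have "\<dots> \<le> r' * \<rho>"
  proof -
    have "max (1 / real p) r' \<le> \<rho>" unfolding \<rho>_def using r'r0 by auto
    moreover have "r' \<ge> 0" unfolding r'_def using \<rho> r0p by simp
    ultimately show ?thesis by (intro mult_left_mono) auto
  qed
  also have "\<dots> = \<rho> ^ Suc k * r" unfolding r'_def by (simp add: ac_simps)
  finally show ?case unfolding \<rho>_def by (simp add: power_mult[symmetric] mult.commute)
qed

abbreviation qq where "qq \<equiv> p ^ fr"

lemma qq_contract:
  assumes x: "absv x \<le> 1" and y: "absv y \<le> 1" and r: "absv (x - y) \<le> r" and r0: "r \<le> r0" "r0 < 1"
  shows "absv (x ^ qq - y ^ qq) \<le> max (1 / real p) r0 * r"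
proof -
  have r0p: "0 \<le> r" using r av_nonneg order_trans by blast
  have "absv (x ^ qq - y ^ qq) \<le> (max (1 / real p) r0) ^ fr * r" by (rule pow_pk_contract[OF assms])
  also have "\<dots> \<le> (max (1 / real p) r0) ^ 1 * r"
    using fr_props(3) r0 p_real_gt1 r0p by (intro mult_right_mono power_decreasing) auto
  finally show ?thesis by simp
qed

lemma conv_shift: "conv X L \<Longrightarrow> conv (\<lambda>n. X (Suc n)) L"
  unfolding conv_def' by (meson le_SucI)

end


context padic_ext begin

lemma qq_ge: "qq \<ge> 2" using p_gt1 fr_props(3)
  by (metis One_nat_def Suc_1 Suc_leI le_trans power_increasing power_one_right less_imp_le_nat)

lemma qq1_notdvd: "\<not> p dvd (qq - 1)"
proof
  assume a: "p dvd (qq - 1)"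
  have "p dvd qq" using fr_props(3) by (simp add: dvd_power)
  then have "p dvd qq - (qq - 1)" using a by (rule dvd_diff_nat)
  moreover have "qq - (qq - 1) = 1" using qq_ge by simp
  ultimately show False using p_gt1 by simp
qed

lemma av_le1_pow_eq1: assumes "absv z ^ m = 1" "m > 0" shows "absv z = 1"
proof (rule ccontr)
  assume "absv z \<noteq> 1"
  then consider "absv z < 1" | "absv z > 1" by linarith
  then show False
  proof cases
    case 1 then have "absv z ^ m < 1" using assms(2) by (simp add: power_less_one_iff)
    then show False using assms(1) by simp
  next
    case 2 then have "absv z ^ m > 1" using assms(2) by (simp add: one_less_power)
    then show False using assms(1) by simp
  qed
qed

lemma root_unity_unique:
  assumes z: "z ^ (qq - 1) = 1" and w: "w ^ (qq - 1) = 1" and zw: "absv (z - w) < 1"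
  shows "z = w"
proof -
  have m: "qq - 1 > 0" using qq_ge by simp
  have az: "absv z = 1" using av_le1_pow_eq1[of z "qq - 1"] z m by (simp add: av_power[symmetric])
  have aw: "absv w = 1" using av_le1_pow_eq1[of w "qq - 1"] w m by (simp add: av_power[symmetric])
  then have wnz: "w \<noteq> 0" by auto
  define v where "v = z / w"
  have v1: "v ^ (qq - 1) = 1" unfolding v_def using z w by (simp add: power_divide)
  have av: "absv v = 1" unfolding v_def using az aw by (simp add: av_divide)
  have vm1: "absv (v - 1) < 1"
  proof -
    have "v - 1 = (z - w) / w" unfolding v_def using wnz by (simp add: field_simps)
    then show ?thesis using zw aw by (simp add: av_divide)
  qed
  define S where "S = (\<Sum>i<qq - 1. (1::'k) ^ (qq - 1 - Suc i) * v ^ i)"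
  have eq: "v ^ (qq - 1) - 1 ^ (qq - 1) = (v - 1) * S" unfolding S_def by (rule power_diff_sumr2)
  have "S - of_nat (qq - 1) = (\<Sum>i<qq - 1. v ^ i - 1 ^ i)"
    unfolding S_def by (simp add: sum_subtractf)
  moreover have "absv (\<Sum>i<qq - 1. v ^ i - 1 ^ i) < 1"
  proof (rule av_sum_less)
    fix i show "absv (v ^ i - 1 ^ i) < 1" using pow_diff[of v 1 i] av vm1 by simp
  qed auto
  ultimately have a: "absv (S - of_nat (qq - 1)) < 1" by simp
  have b: "absv (of_nat (qq - 1) :: 'k) = 1" using av_nat_notdvd qq1_notdvd by blast
  have "absv (of_nat (qq - 1) + (S - of_nat (qq - 1))) = 1" using av_add_strict[of "S - of_nat (qq - 1)" "of_nat (qq - 1)"] a b by simp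
  then have "S \<noteq> 0" by auto
  moreover have "(v - 1) * S = 0" using eq v1 by simp
  ultimately have "v = 1" by simp
  then show ?thesis unfolding v_def using wnz by simp
qed

lemma TEICH: assumes b1: "absv \<beta> = 1"
  shows "conv (\<lambda>n. \<beta> ^ (qq ^ n)) (omega absv qq \<beta>) \<and> absv (omega absv qq \<beta>) = 1"
proof -
  define x where "x n = \<beta> ^ (qq ^ n)" for n
  have xS: "\<And>n. x (Suc n) = x n ^ qq" unfolding x_def by (simp add: power_mult[symmetric] mult.commute)
  have x1: "\<And>n. absv (x n) = 1" unfolding x_def using b1 by (simp add: av_power)
  define r0 where "r0 = absv (\<beta> ^ qq - \<beta>)"
  have r0: "r0 < 1" unfolding r0_def using FERMAT b1 by simp
  define \<rho> where "\<rho> = max (1 / real p) r0"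
  have \<rho>: "0 \<le> \<rho>" "\<rho> < 1" unfolding \<rho>_def using r0 p_real_gt1 by (auto simp: le_max_iff_disj)
  have r0p: "0 \<le> r0" unfolding r0_def by simp
  have step: "\<And>n. absv (x (Suc n) - x n) \<le> r0 * \<rho> ^ n"
  proof -
    fix n show "absv (x (Suc n) - x n) \<le> r0 * \<rho> ^ n"
    proof (induction n)
      case 0 then show ?case unfolding r0_def x_def by simp
    next
      case (Suc n)
      have le: "r0 * \<rho> ^ n \<le> r0" using \<rho> r0p by (simp add: mult_left_le power_le_one)
      have "absv (x (Suc n) ^ qq - x n ^ qq) \<le> max (1 / real p) r0 * (r0 * \<rho> ^ n)"
        by (rule qq_contract) (use x1 Suc.IH le r0 in auto)
      then have "absv (x (Suc n) ^ qq - x n ^ qq) \<le> \<rho> * (r0 * \<rho> ^ n)" unfolding \<rho>_def .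
      then show ?case using xS[of "Suc n"] xS[of n] by (simp add: ac_simps)
    qed
  qed
  obtain \<zeta> where \<zeta>: "conv x \<zeta>" using geom_conv[OF step \<rho> r0p] by blast
  have "conv (\<lambda>n. x (Suc n)) \<zeta>" using conv_shift[OF \<zeta>] .
  moreover have "conv (\<lambda>n. x (Suc n)) (\<zeta> ^ qq)" unfolding xS using conv_power[OF \<zeta>] .
  ultimately have zq: "\<zeta> ^ qq = \<zeta>" using conv_unique by blast
  obtain N where N: "\<forall>n\<ge>N. absv (x n - \<zeta>) < 1" using \<zeta> unfolding conv_def' by (meson zero_less_one)
  have xz: "absv (x N - \<zeta>) < 1" using N by blast
  have az: "absv \<zeta> = 1"
  proof -
    have "absv (x N + (\<zeta> - x N)) = absv (x N)" using av_add_strict[of "\<zeta> - x N" "x N"] xz x1 av_diff_comm[of "x N" \<zeta>] by simp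
    then show ?thesis using x1 by simp
  qed
  have z1: "\<zeta> ^ (qq - 1) = 1"
  proof -
    have qs: "qq = Suc (qq - 1)" using qq_ge by simp
    have "\<zeta> * \<zeta> ^ (qq - 1) = \<zeta> ^ qq" by (metis qs power_Suc)
    then have "\<zeta> * \<zeta> ^ (qq - 1) = \<zeta> * 1" using zq by simp
    moreover have "\<zeta> \<noteq> 0" using az by auto
    ultimately show ?thesis by simp
  qed
  have bz: "absv (\<beta> - \<zeta>) < 1"
  proof -
    have "absv (x N - x 0) \<le> r0 * \<rho> ^ 0" by (rule geom_dist[OF step \<rho>(1) _ r0p]) (use \<rho> in auto)
    then have "absv (\<beta> - x N) < 1" using r0 av_diff_comm[of "x N" "x 0"] unfolding x_def by simp
    then show ?thesis using av_trans[of \<beta> \<zeta> "x N"] xz by simp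
  qed
  have om: "omega absv qq \<beta> = \<zeta>" unfolding omega_def
  proof (rule the_equality)
    show "\<zeta> ^ (qq - 1) = 1 \<and> absv (\<beta> - \<zeta>) < 1" using z1 bz by simp
  next
    fix z assume z: "z ^ (qq - 1) = 1 \<and> absv (\<beta> - z) < 1"
    have "absv (z - \<beta>) < 1" using z av_diff_comm[of \<beta> z] by simp
    then have "absv (z - \<zeta>) < 1" using av_trans[of z \<zeta> \<beta>] bz by (meson le_less_trans max_less_iff_conj)
    then show "z = \<zeta>" using root_unity_unique z z1 by blast
  qed
  show ?thesis using \<zeta> az unfolding om x_def by simp
qed

end


context padic_ext begin

lemma qq_n_ge: "qq ^ n \<ge> n"
proof -
  have "n < 2 ^ n" by (rule less_exp)
  also have "(2::nat) ^ n \<le> qq ^ n" using qq_ge by (rule power_mono) simp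
  finally show ?thesis by simp
qed

definition Nn :: "int \<Rightarrow> int \<Rightarrow> nat \<Rightarrow> nat" where
  "Nn A B n = nat (A * int p ^ (fr * n) + B)"

lemma Nn_eq: assumes "A \<ge> 1" "n \<ge> nat \<bar>B\<bar> + 1"
  shows "int (Nn A B n) = A * int (qq ^ n) + B" "int (Nn A B n) \<ge> int n + B" "Nn A B n \<ge> 1"
proof -
  have pq: "int p ^ (fr * n) = int (qq ^ n)" by (simp add: power_mult)
  have q1: "int (qq ^ n) \<ge> int n" using qq_n_ge[of n] by (rule of_nat_mono)
  have "A * int (qq ^ n) \<ge> 1 * int (qq ^ n)" using assms(1) by (intro mult_right_mono) auto
  then have ge: "A * int (qq ^ n) + B \<ge> int n + B" using q1 by simp
  moreover have "int n + B \<ge> 1" using assms(2) by simp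
  ultimately show "int (Nn A B n) = A * int (qq ^ n) + B" unfolding Nn_def pq by simp
  then show "int (Nn A B n) \<ge> int n + B" using ge by simp
  then show "Nn A B n \<ge> 1" using \<open>int n + B \<ge> 1\<close> by simp
qed

lemma arg_conv: assumes "A \<ge> 1"
  shows "conv (\<lambda>n. (of_nat (Nn A B n) :: 'k)) (of_int B)"
proof -
  have c0: "conv (\<lambda>n. of_int A * of_nat (qq ^ n) :: 'k) 0"
  proof (rule conv_geom0)
    fix n
    have "absv (of_int A * of_nat (qq ^ n) :: 'k) \<le> absv (of_nat (qq ^ n) :: 'k)"
      using av_of_int_le1[of A] by (simp add: mult_left_le_one_le)
    also have "\<dots> = (1 / real p) ^ (fr * n)" by (simp add: av_power av_p power_mult)
    also have "\<dots> \<le> (1 / real p) ^ n" using fr_props(3) p_real_gt1 by (intro power_decreasing) auto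
    finally show "absv (of_int A * of_nat (qq ^ n) :: 'k) \<le> (1 / real p) ^ n" .
  qed
  have "conv (\<lambda>n. of_int B + of_int A * of_nat (qq ^ n) :: 'k) (of_int B + 0)" by (intro conv_add conv_const c0)
  then have c1: "conv (\<lambda>n. of_int B + of_int A * of_nat (qq ^ n) :: 'k) (of_int B)" by simp
  show ?thesis
  proof (rule conv_eventually[OF c1, of "nat \<bar>B\<bar> + 1"], intro allI impI)
    fix n assume "n \<ge> nat \<bar>B\<bar> + 1"
    then have "int (Nn A B n) = A * int (qq ^ n) + B" using Nn_eq assms by blast
    then have "(of_int (int (Nn A B n)) :: 'k) = of_int (A * int (qq ^ n) + B)" by simp
    then show "of_int B + of_int A * of_nat (qq ^ n) = (of_nat (Nn A B n) :: 'k)" by simp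
  qed
qed

lemma term_conv: assumes A: "A \<ge> 1" and b: "absv \<beta> \<le> 1"
  shows "conv (\<lambda>n. poly C (of_nat (Nn A B n)) * \<beta> ^ (Nn A B n))
           (if absv \<beta> = 1 then poly C (of_int B) * omega absv qq \<beta> ^ nat A * \<beta> powi B else 0)"
proof -
  have pc: "conv (\<lambda>n. poly C (of_nat (Nn A B n))) (poly C (of_int B))" using conv_poly[OF arg_conv[OF A]] .
  show ?thesis
  proof (cases "absv \<beta> = 1")
    case True
    then have bnz: "\<beta> \<noteq> 0" by auto
    have t: "conv (\<lambda>n. \<beta> ^ (qq ^ n)) (omega absv qq \<beta>)" using TEICH[OF True] by blast
    have "conv (\<lambda>n. poly C (of_nat (Nn A B n)) * ((\<beta> ^ (qq ^ n)) ^ nat A * \<beta> powi B))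
           (poly C (of_int B) * (omega absv qq \<beta> ^ nat A * \<beta> powi B))"
      by (intro conv_mult pc conv_power t conv_const)
    then have c: "conv (\<lambda>n. poly C (of_nat (Nn A B n)) * ((\<beta> ^ (qq ^ n)) ^ nat A * \<beta> powi B))
           (poly C (of_int B) * omega absv qq \<beta> ^ nat A * \<beta> powi B)" by (simp add: mult.assoc)
    have "conv (\<lambda>n. poly C (of_nat (Nn A B n)) * \<beta> ^ (Nn A B n))
           (poly C (of_int B) * omega absv qq \<beta> ^ nat A * \<beta> powi B)"
    proof (rule conv_eventually[OF c, of "nat \<bar>B\<bar> + 1"], intro allI impI)
      fix n assume "n \<ge> nat \<bar>B\<bar> + 1"
      then have e: "int (Nn A B n) = A * int (qq ^ n) + B" using Nn_eq A by blast
      have "\<beta> ^ (Nn A B n) = \<beta> powi (int (Nn A B n))" by simp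
      also have "\<dots> = \<beta> powi (A * int (qq ^ n)) * \<beta> powi B" unfolding e using bnz by (simp add: power_int_add)
      also have "\<beta> powi (A * int (qq ^ n)) = (\<beta> ^ (qq ^ n)) ^ nat A"
      proof -
        have h: "A * int (qq ^ n) = int (nat A * qq ^ n)" using A by simp
        have "\<beta> powi (A * int (qq ^ n)) = \<beta> ^ (nat A * qq ^ n)" unfolding h by (rule power_int_of_nat)
        also have "\<dots> = (\<beta> ^ (qq ^ n)) ^ nat A" by (metis mult.commute power_mult)
        finally show ?thesis .
      qed
      finally show "poly C (of_nat (Nn A B n)) * ((\<beta> ^ (qq ^ n)) ^ nat A * \<beta> powi B) = poly C (of_nat (Nn A B n)) * \<beta> ^ (Nn A B n)"
        by simp
    qed
    then show ?thesis using True by simp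
  next
    case False
    then have blt: "absv \<beta> < 1" using b by simp
    obtain N1 where N1: "\<forall>n\<ge>N1. absv (poly C (of_nat (Nn A B n))) \<le> max (absv (poly C (of_int B))) 1"
      using conv_bounded[OF pc] by blast
    define K where "K = max (absv (poly C (of_int B))) 1"
    have K: "K \<ge> 1" unfolding K_def by simp
    have "conv (\<lambda>n. poly C (of_nat (Nn A B n)) * \<beta> ^ (Nn A B n)) 0"
      unfolding conv_zero
    proof (intro allI impI)
      fix \<epsilon> :: real assume e: "\<epsilon> > 0"
      have eK: "\<epsilon> / K > 0" using e K by simp
      obtain K0 where K0: "absv \<beta> ^ K0 < \<epsilon> / K"
      proof (cases "absv \<beta> = 0")
        case True then show ?thesis using that[of 1] eK by simp
      next
        case False then show ?thesis using that real_arch_pow_inv[OF eK, of "absv \<beta>"] blt by auto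
      qed
      define M where "M = max N1 (max (nat \<bar>B\<bar> + 1) (K0 + nat \<bar>B\<bar>))"
      have "\<forall>n\<ge>M. absv (poly C (of_nat (Nn A B n)) * \<beta> ^ (Nn A B n)) < \<epsilon>"
      proof (intro allI impI)
        fix n assume n: "n \<ge> M"
        have nB: "n \<ge> nat \<bar>B\<bar> + 1" using n unfolding M_def by simp
        have "int (Nn A B n) \<ge> int n + B" using Nn_eq(2)[OF A nB] .
        moreover have "K0 + nat \<bar>B\<bar> \<le> n" using n unfolding M_def by simp
        ultimately have "int K0 \<le> int (Nn A B n)" by linarith
        then have NK: "Nn A B n \<ge> K0" by simp
        have pb: "absv (poly C (of_nat (Nn A B n))) \<le> K" using N1 n unfolding M_def K_def by simp
        have "absv (\<beta> ^ (Nn A B n)) \<le> absv \<beta> ^ K0"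
          unfolding av_power using NK blt by (intro power_decreasing) auto
        then have bb: "absv (\<beta> ^ (Nn A B n)) < \<epsilon> / K" using K0 by simp
        have "absv (poly C (of_nat (Nn A B n)) * \<beta> ^ (Nn A B n)) \<le> K * absv (\<beta> ^ (Nn A B n))"
          using pb by (simp add: mult_right_mono)
        also have "\<dots> < K * (\<epsilon> / K)" using bb K by (intro mult_strict_left_mono) auto
        also have "\<dots> = \<epsilon>" using K by simp
        finally show "absv (poly C (of_nat (Nn A B n)) * \<beta> ^ (Nn A B n)) < \<epsilon>" .
      qed
      then show "\<exists>N. \<forall>n\<ge>N. absv (poly C (of_nat (Nn A B n)) * \<beta> ^ (Nn A B n)) < \<epsilon>" by blast
    qed
    then show ?thesis using False by simp
  qed
qed

end


context padic begin
lemma root_le1: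
  assumes ac: "\<forall>i<l. absv (a i) \<le> 1" and g: "g = monom 1 l + (\<Sum>i<l. monom (a i) i)" and r: "poly g \<beta> = 0"
  shows "absv \<beta> \<le> 1"
proof (rule ccontr)
  assume "\<not> absv \<beta> \<le> 1"
  then have b: "absv \<beta> > 1" by simp
  have pg: "poly g \<beta> = \<beta> ^ l + (\<Sum>i<l. a i * \<beta> ^ i)" unfolding g by (simp add: poly_sum poly_monom)
  have "absv (\<Sum>i<l. a i * \<beta> ^ i) < absv (\<beta> ^ l)"
  proof (cases "l = 0")
    case True then show ?thesis using b by simp
  next
    case False
    have "absv (\<Sum>i<l. a i * \<beta> ^ i) \<le> absv \<beta> ^ (l - 1)"
    proof (rule av_sum_le)
      fix i assume i: "i \<in> {..<l}"
      have "absv (a i * \<beta> ^ i) \<le> absv \<beta> ^ i" using ac i by (simp add: av_power mult_left_le_one_le)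
      also have "\<dots> \<le> absv \<beta> ^ (l - 1)" using i b by (intro power_increasing) auto
      finally show "absv (a i * \<beta> ^ i) \<le> absv \<beta> ^ (l - 1)" .
    qed simp_all
    also have "\<dots> < absv \<beta> ^ l" using b False by (intro power_strict_increasing) auto
    finally show ?thesis by (simp add: av_power)
  qed
  then have "absv (poly g \<beta>) = absv (\<beta> ^ l)" unfolding pg by (rule av_add_strict)
  then show False using r b by (simp add: av_power)
qed
end

theorem corollary4p1:
  fixes p :: nat and absv :: "'k::field_char_0 \<Rightarrow> real"
    and s :: "nat \<Rightarrow> 'k" and l :: nat and a :: "nat \<Rightarrow> 'k" and g :: "'k poly"
    and c :: "'k \<Rightarrow> 'k poly" and d e :: nat and A B :: int
  assumes "prime p"
    and "padic_absv p absv"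
    and "\<forall>n. s n \<in> Zp_in absv"
    and "\<forall>i<l. a i \<in> Zp_in absv"
    and "\<forall>n. s (n + l) + (\<Sum>i<l. a i * s (n + i)) = 0"
    and "g = monom 1 l + (\<Sum>i<l. monom (a i) i)"
    and "\<exists>rs. g = (\<Prod>r\<leftarrow>rs. [:- r, 1:])"
    and "field_generated_by (Qp_in absv) {\<beta>. poly g \<beta> = 0}"
    and "ext_degree (Qp_in absv) d"
    and "e > 0"
    and "{absv x | x. x \<noteq> 0} = {real p powr (real_of_int k / real e) | k. True}"
    and "\<forall>n. s n = (\<Sum>\<beta>\<in>{\<beta>. poly g \<beta> = 0}. poly (c \<beta>) (of_nat n) * \<beta> ^ n)"
    and "A \<ge> 1"
  shows "let L = (\<Sum>\<beta>\<in>{\<beta>. poly g \<beta> = 0 \<and> absv \<beta> = 1}.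
                   poly (c \<beta>) (of_int B) * omega absv (p ^ (d div e)) \<beta> ^ nat A * \<beta> powi B)
         in L \<in> Zp_in absv
            \<and> abs_converges absv (\<lambda>n. s (nat (A * int p ^ ((d div e) * n) + B))) L
            \<and> (\<exists>q::'k poly. q \<noteq> 0 \<and> (\<forall>i. coeff q i \<in> Qp_in absv) \<and> poly q L = 0)"
proof -
  note asm = assms
  interpret padic_ext p absv e d
    by unfold_locales (use asm(1,2,9,10,11) in auto)
  define R where "R = {\<beta>. poly g \<beta> = 0}"
  define T where "T \<beta> = (if absv \<beta> = 1 then poly (c \<beta>) (of_int B) * omega absv qq \<beta> ^ nat A * \<beta> powi B else 0)" for \<beta>
  define L where "L = (\<Sum>\<beta>\<in>{\<beta>. poly g \<beta> = 0 \<and> absv \<beta> = 1}. poly (c \<beta>) (of_int B) * omega absv qq \<beta> ^ nat A * \<beta> powi B)"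
  have ac: "\<forall>i<l. absv (a i) \<le> 1" using asm(4) unfolding Zp_in_def by auto
  have gnz: "g \<noteq> 0"
  proof
    assume "g = 0"
    then have "coeff g l = 0" by simp
    moreover have "coeff g l = 1" unfolding asm(6) by (simp add: coeff_sum coeff_monom)
    ultimately show False by simp
  qed
  have Rfin: "finite R" unfolding R_def using poly_roots_finite[OF gnz] .
  have Rle: "\<And>\<beta>. \<beta> \<in> R \<Longrightarrow> absv \<beta> \<le> 1" unfolding R_def using root_le1[OF ac asm(6)] by blast
  have cs: "conv (\<lambda>n. \<Sum>\<beta>\<in>R. poly (c \<beta>) (of_nat (Nn A B n)) * \<beta> ^ (Nn A B n)) (\<Sum>\<beta>\<in>R. T \<beta>)"
    unfolding T_def using Rfin by (intro conv_sum term_conv asm(13) Rle)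
  have "(\<Sum>\<beta>\<in>R. T \<beta>) = L"
  proof -
    have "(\<Sum>\<beta>\<in>R. T \<beta>) = (\<Sum>\<beta>\<in>{\<beta>\<in>R. absv \<beta> = 1}. poly (c \<beta>) (of_int B) * omega absv qq \<beta> ^ nat A * \<beta> powi B)"
      unfolding T_def by (simp add: sum.inter_filter[OF Rfin])
    also have "{\<beta>\<in>R. absv \<beta> = 1} = {\<beta>. poly g \<beta> = 0 \<and> absv \<beta> = 1}" unfolding R_def by auto
    finally show ?thesis unfolding L_def .
  qed
  moreover have "(\<lambda>n. \<Sum>\<beta>\<in>R. poly (c \<beta>) (of_nat (Nn A B n)) * \<beta> ^ (Nn A B n)) = (\<lambda>n. s (Nn A B n))"
    unfolding R_def using asm(12) by simp
  ultimately have cL: "conv (\<lambda>n. s (Nn A B n)) L" using cs by simp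
  have LZ: "L \<in> Zp_in absv" using Zp_closed[OF _ cL] asm(3) by blast
  have alg: "\<exists>q::'k poly. q \<noteq> 0 \<and> (\<forall>i. coeff q i \<in> Qp_in absv) \<and> poly q L = 0"
  proof (intro exI conjI allI)
    show "[:- L, 1:] \<noteq> 0" by simp
    show "poly [:- L, 1:] L = 0" by simp
  next
    fix i
    have LQ: "L \<in> Qp_in absv" using LZ unfolding Zp_in_def by simp
    show "coeff [:- L, 1:] i \<in> Qp_in absv"
      using Qp_neg[OF LQ] Qp_1 Qp_0 by (cases i) (auto simp: coeff_pCons split: nat.splits)
  qed
  show ?thesis unfolding Let_def fr_eq using LZ cL alg unfolding L_def Nn_def by blast
qed



end
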